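(* Let $d,n\ge2$ and let $w\in G(d,d,n)$ be a parabolic Coxeter element. If $w$ consists of a single simultaneous cycle of length $k$ (all other colored integers fixed), then the interval $[\varepsilon,w]$ in $(G(d,d,n),\le_T)$ is isomorphic to $\mathcal{NC}_{G(1,1,k)}$.
   Context: $G(d,d,n)$ is the group of $n\times n$ monomial matrices with $d$-th roots of unity as nonzero entries whose product is $1$, viewed as permutations of colored integers $k^{(s)}$ ($=\zeta^se_k$, $\zeta=e^{2\pi i/d}$, $k\in[n]$, $s\in\mathbb{Z}/d$). The simultaneous cycle $((k_1^{(t_1)}\;\ldots\;k_r^{(t_r)}))$ is the product over $c\in\mathbb{Z}/d$ of the cycles $(k_1^{(t_1+c)}\ldots k_r^{(t_r+c)})$; its length is $r$. $T$ is the set of reflections, $\ell_T$ the absolute length (minimal number of reflection factors), $u\le_Tv$ iff $\ell_T(v)=\ell_T(u)+\ell_T(u^{-1}v)$. A parabolic Coxeter element is an element $w$ with $w\le_T\gamma'$ for some Coxeter element $\gamma'$ (equivalently a Coxeter element of a parabolic subgroup). $\mathcal{NC}_{G(1,1,k)}$ is the noncrossing partition lattice of $G(1,1,k)\cong\mathfrak{S}_k$, i.e. the interval $[\varepsilon,(1\,2\,\ldots\,k)]$ in $\mathfrak{S}_k$ under absolute order (isomorphic to Kreweras' lattice of noncrossing partitions of $[k]$). *)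

theory Defs
  imports Complex_Main "Jordan_Normal_Form.Matrix"
begin

(* Elements of G(d,d,n) are represented as complex n x n monomial matrices,
   acting on column vectors; the coloured integer k^(s) is zeta^s e_k. *)

definition zeta :: "nat \<Rightarrow> complex" where
  "zeta d = cis (2 * pi / real d)"

definition Gdd :: "nat \<Rightarrow> nat \<Rightarrow> complex mat set" where
  "Gdd d n = {M \<in> carrier_mat n n. \<exists>\<pi>. bij_betw \<pi> {..<n} {..<n}
      \<and> (\<forall>i<n. \<forall>j<n. M $$ (i, j) \<noteq> 0 \<longleftrightarrow> i = \<pi> j)
      \<and> (\<forall>j<n. (M $$ (\<pi> j, j)) ^ d = 1)
      \<and> (\<Prod>j<n. M $$ (\<pi> j, j)) = 1}"

definition refls :: "nat \<Rightarrow> nat \<Rightarrow> complex mat set" where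
  "refls d n = {M \<in> Gdd d n. M \<noteq> 1\<^sub>m n \<and>
     (\<exists>a \<in> carrier_vec n. a \<noteq> 0\<^sub>v n \<and>
        (\<forall>v \<in> carrier_vec n. a \<bullet> v = 0 \<longrightarrow> M *\<^sub>v v = v))}"

definition mprod :: "nat \<Rightarrow> complex mat list \<Rightarrow> complex mat" where
  "mprod n rs = foldr (*) rs (1\<^sub>m n)"

definition absl :: "nat \<Rightarrow> nat \<Rightarrow> complex mat \<Rightarrow> nat" where
  "absl d n w = (LEAST m. \<exists>rs. set rs \<subseteq> refls d n \<and> length rs = m \<and> mprod n rs = w)"

definition absle :: "nat \<Rightarrow> nat \<Rightarrow> complex mat \<Rightarrow> complex mat \<Rightarrow> bool" where
  "absle d n u v \<longleftrightarrow> u \<in> Gdd d n \<and> v \<in> Gdd d n \<and>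
     (\<exists>x \<in> Gdd d n. u * x = v \<and> absl d n v = absl d n u + absl d n x)"

text \<open>Coxeter number of G(d,d,n) for d, n >= 2: the largest degree (n-1)d.\<close>
definition coxnum :: "nat \<Rightarrow> nat \<Rightarrow> nat" where
  "coxnum d n = (n - 1) * d"

definition regular :: "nat \<Rightarrow> nat \<Rightarrow> complex \<Rightarrow> complex mat \<Rightarrow> bool" where
  "regular d n z w \<longleftrightarrow> w \<in> Gdd d n \<and>
     (\<exists>v \<in> carrier_vec n. v \<noteq> 0\<^sub>v n \<and> w *\<^sub>v v = z \<cdot>\<^sub>v v \<and>
        (\<forall>r \<in> refls d n. r *\<^sub>v v \<noteq> v))"

text \<open>Coxeter element (Bessis): a e^{2 pi i/h}-regular element.\<close>
definition coxeter :: "nat \<Rightarrow> nat \<Rightarrow> complex mat \<Rightarrow> bool" where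
  "coxeter d n w \<longleftrightarrow> regular d n (cis (2 * pi / real (coxnum d n))) w"

definition parabolic_coxeter :: "nat \<Rightarrow> nat \<Rightarrow> complex mat \<Rightarrow> bool" where
  "parabolic_coxeter d n w \<longleftrightarrow> (\<exists>\<gamma>. coxeter d n \<gamma> \<and> absle d n w \<gamma>)"

text \<open>w is the single simultaneous cycle ((ks!0^(ts!0) ... ks!(k-1)^(ts!(k-1)))),
  all other coloured integers fixed.\<close>
definition single_sim_cycle :: "nat \<Rightarrow> nat \<Rightarrow> complex mat \<Rightarrow> nat \<Rightarrow> bool" where
  "single_sim_cycle d n w k \<longleftrightarrow> w \<in> Gdd d n \<and> k \<ge> 1 \<and>
     (\<exists>ks ts :: nat list. length ks = k \<and> length ts = k \<and> distinct ks \<and> set ks \<subseteq> {..<n} \<and>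
        (\<forall>i<k. w *\<^sub>v (zeta d ^ (ts!i) \<cdot>\<^sub>v unit_vec n (ks!i))
              = zeta d ^ (ts!((i+1) mod k)) \<cdot>\<^sub>v unit_vec n (ks!((i+1) mod k))) \<and>
        (\<forall>j<n. j \<notin> set ks \<longrightarrow> w *\<^sub>v unit_vec n j = unit_vec n j))"

text \<open>The long cycle (1 2 ... k) in G(1,1,k) = S_k as a permutation matrix (0-indexed).\<close>
definition long_cycle :: "nat \<Rightarrow> complex mat" where
  "long_cycle k = mat k k (\<lambda>(i, j). if i = (j + 1) mod k then 1 else 0)"

text \<open>NC_{G(1,1,k)}: the interval [1, (1 2 ... k)] in (G(1,1,k), \<le>_T).\<close>
definition NC_A :: "nat \<Rightarrow> complex mat set" where
  "NC_A k = {u. absle 1 k u (long_cycle k)}"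

definition interval :: "nat \<Rightarrow> nat \<Rightarrow> complex mat \<Rightarrow> complex mat set" where
  "interval d n w = {u. absle d n (1\<^sub>m n) u \<and> absle d n u w}"

end

theory Submission
  imports Defs "HOL-Library.Function_Algebras"
begin


definition sc :: "complex \<Rightarrow> (nat \<Rightarrow> complex) \<Rightarrow> nat \<Rightarrow> complex" where
  "sc c f = (\<lambda>i. c * f i)"

interpretation FV: vector_space sc
  by unfold_locales (auto simp: sc_def func_plus algebra_simps)

definition Vn :: "nat \<Rightarrow> (nat \<Rightarrow> complex) set" where
  "Vn n = {f. \<forall>i\<ge>n. f i = 0}"

definition ev :: "nat \<Rightarrow> nat \<Rightarrow> complex" where
  "ev i = (\<lambda>j. if j = i then 1 else 0)"

lemma sum_fun_apply: "(\<Sum>i\<in>A. f i) x = (\<Sum>i\<in>A. f i x)" for f :: "nat \<Rightarrow> nat \<Rightarrow> complex"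
  by (induction A rule: infinite_finite_induct) (auto simp: func_plus func_zero)

lemma Vn_span: "Vn n \<subseteq> FV.span (ev ` {..<n})"
proof
  fix f assume f: "f \<in> Vn n"
  have "f = (\<Sum>i\<in>{..<n}. sc (f i) (ev i))"
  proof
    fix x show "f x = (\<Sum>i\<in>{..<n}. sc (f i) (ev i)) x"
    proof (cases "x < n")
      case True
      have "(\<Sum>i\<in>{..<n}. sc (f i) (ev i)) x = (\<Sum>i\<in>{..<n}. f i * (if x = i then 1 else 0))"
        by (simp add: sum_fun_apply sc_def ev_def eq_commute)
      also have "\<dots> = (\<Sum>i\<in>{..<n}. if x = i then f i else 0)"
        by (rule sum.cong) auto
      also have "\<dots> = f x" using True by (simp add: sum.delta')
      finally show ?thesis by simp
    next
      case False
      then show ?thesis using f by (auto simp: sum_fun_apply sc_def ev_def Vn_def intro!: sum.neutral)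
    qed
  qed
  also have "\<dots> \<in> FV.span (ev ` {..<n})"
    by (intro FV.span_sum FV.span_scale FV.span_base) auto
  finally show "f \<in> FV.span (ev ` {..<n})" .
qed

lemma basis_ex:
  assumes "A \<subseteq> Vn n"
  obtains B where "B \<subseteq> A" "FV.independent B" "A \<subseteq> FV.span B" "finite B" "card B = FV.dim A"
proof -
  obtain B where B: "B \<subseteq> A" "FV.independent B" "A \<subseteq> FV.span B"
    using FV.maximal_independent_subset[of A] by blast
  have "B \<subseteq> FV.span (ev ` {..<n})" using B assms Vn_span by blast
  then have "finite B" using FV.independent_span_bound[of "ev ` {..<n}" B] B by auto
  moreover have "card B = FV.dim A" using FV.basis_card_eq_dim B by blast
  ultimately show ?thesis by (rule that[OF B])
qed

lemma basis_ext:
  assumes "A \<subseteq> Vn n" "S \<subseteq> A" "FV.independent S"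
  obtains B where "S \<subseteq> B" "B \<subseteq> A" "FV.independent B" "A \<subseteq> FV.span B" "finite B" "card B = FV.dim A"
proof -
  obtain B where B: "S \<subseteq> B" "B \<subseteq> A" "FV.independent B" "A \<subseteq> FV.span B"
    by (rule FV.maximal_independent_subset_extend[OF assms(2,3)])
  have "B \<subseteq> FV.span (ev ` {..<n})" using B assms Vn_span by blast
  then have "finite B" using FV.independent_span_bound[of "ev ` {..<n}" B] B by auto
  moreover have "card B = FV.dim A" using FV.basis_card_eq_dim B by blast
  ultimately show ?thesis by (rule that[OF B])
qed

lemma dim_sum_le:
  assumes "A \<subseteq> Vn n" "B \<subseteq> Vn n" "C \<subseteq> FV.span (A \<union> B)"
  shows "FV.dim C \<le> FV.dim A + FV.dim B"
proof -
  obtain BA where BA: "BA \<subseteq> A" "A \<subseteq> FV.span BA" "finite BA" "card BA = FV.dim A"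
    by (rule basis_ex[OF assms(1)]) blast
  obtain BB where BB: "BB \<subseteq> B" "B \<subseteq> FV.span BB" "finite BB" "card BB = FV.dim B"
    by (rule basis_ex[OF assms(2)]) blast
  have "A \<union> B \<subseteq> FV.span (BA \<union> BB)"
    using BA BB FV.span_mono[of BA "BA \<union> BB"] FV.span_mono[of BB "BA \<union> BB"] by blast
  then have "FV.span (A \<union> B) \<subseteq> FV.span (BA \<union> BB)"
    using FV.span_minimal FV.subspace_span by blast
  then have "FV.dim C \<le> card (BA \<union> BB)"
    using assms(3) BA BB by (intro FV.dim_le_card) auto
  also have "\<dots> \<le> card BA + card BB" by (rule card_Un_le)
  finally show ?thesis using BA BB by simp
qed

lemma dim_sum_eq_Int:
  assumes "A \<subseteq> Vn n" "B \<subseteq> Vn n" "C \<subseteq> FV.span (A \<union> B)"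
    and "FV.dim A + FV.dim B \<le> FV.dim C" and "y \<in> A" "y \<in> B"
  shows "y = 0"
proof (rule ccontr)
  assume y0: "y \<noteq> 0"
  have ind: "FV.independent {y}" using y0 by simp
  have sub: "{y} \<subseteq> A" using assms(5) by simp
  obtain BA where BA: "{y} \<subseteq> BA" "BA \<subseteq> A" "A \<subseteq> FV.span BA" "finite BA" "card BA = FV.dim A"
    by (rule basis_ext[OF assms(1) sub ind]) blast
  obtain BB where BB: "BB \<subseteq> B" "B \<subseteq> FV.span BB" "finite BB" "card BB = FV.dim B"
    by (rule basis_ex[OF assms(2)]) blast
  have yB: "y \<in> FV.span BB" using BB assms(6) by blast
  have "A \<union> B \<subseteq> FV.span (BA \<union> BB)"
    using BA BB FV.span_mono[of BA "BA \<union> BB"] FV.span_mono[of BB "BA \<union> BB"] by blast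
  then have "FV.span (A \<union> B) \<subseteq> FV.span (BA \<union> BB)"
    using FV.span_minimal FV.subspace_span by blast
  also have "BA \<union> BB = insert y ((BA - {y}) \<union> BB)" using BA by auto
  also have "FV.span \<dots> = FV.span ((BA - {y}) \<union> BB)"
    using yB FV.span_redundant FV.span_mono[of BB "(BA - {y}) \<union> BB"] by blast
  finally have "FV.dim C \<le> card ((BA - {y}) \<union> BB)"
    using assms(3) BA BB by (intro FV.dim_le_card) auto
  also have "\<dots> \<le> card (BA - {y}) + card BB" by (rule card_Un_le)
  finally have "FV.dim C \<le> card (BA - {y}) + card BB" .
  moreover have "card (BA - {y}) + 1 = card BA" by (metis card_Suc_Diff1 Suc_eq_plus1 BA(1,4) insert_subset)
  ultimately show False using assms(4) BA BB by linarith
qed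

lemma dim_strict:
  assumes "B \<subseteq> Vn n" "A \<subseteq> B" "FV.subspace A" "y \<in> B" "y \<notin> A"
  shows "FV.dim A < FV.dim B"
proof -
  have An: "A \<subseteq> Vn n" using assms by blast
  obtain BA where BA: "BA \<subseteq> A" "FV.independent BA" "A \<subseteq> FV.span BA" "finite BA" "card BA = FV.dim A"
    by (rule basis_ex[OF An]) blast
  have "FV.span BA = A" using BA assms(3) FV.span_subspace by blast
  then have ind: "FV.independent (insert y BA)"
    using BA assms(5) FV.independent_insertI by auto
  have sub: "insert y BA \<subseteq> B" using assms BA by blast
  obtain BB where BB: "insert y BA \<subseteq> BB" "BB \<subseteq> B" "finite BB" "card BB = FV.dim B"
    by (rule basis_ext[OF assms(1) sub ind]) blast
  have "card (insert y BA) \<le> card BB" using BB by (intro card_mono) auto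
  moreover have "card (insert y BA) = card BA + 1" using BA assms(5) by (subst card_insert_disjoint) auto
  ultimately show ?thesis using BA BB by simp
qed


definition act :: "nat \<Rightarrow> complex mat \<Rightarrow> (nat \<Rightarrow> complex) \<Rightarrow> nat \<Rightarrow> complex" where
  "act n M f = (\<lambda>i. if i < n then (\<Sum>j<n. M $$ (i, j) * f j) else 0)"

definition Rg :: "nat \<Rightarrow> complex mat \<Rightarrow> (nat \<Rightarrow> complex) set" where
  "Rg n M = {act n M f - f | f. f \<in> Vn n}"

definition rho :: "nat \<Rightarrow> complex mat \<Rightarrow> nat" where
  "rho n M = FV.dim (Rg n M)"

lemma act_Vn[simp]: "act n M f \<in> Vn n"
  by (simp add: act_def Vn_def)

lemma Vn_diff[simp]: "f \<in> Vn n \<Longrightarrow> g \<in> Vn n \<Longrightarrow> f - g \<in> Vn n"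
  by (simp add: Vn_def)
lemma Vn_add[simp]: "f \<in> Vn n \<Longrightarrow> g \<in> Vn n \<Longrightarrow> f + g \<in> Vn n"
  by (simp add: Vn_def)
lemma Vn_sc[simp]: "f \<in> Vn n \<Longrightarrow> sc c f \<in> Vn n"
  by (simp add: Vn_def sc_def)
lemma Vn_uminus[simp]: "f \<in> Vn n \<Longrightarrow> - f \<in> Vn n"
  by (simp add: Vn_def)
lemma Vn_zero[simp]: "0 \<in> Vn n"
  by (simp add: Vn_def)
lemma ev_Vn[simp]: "i < n \<Longrightarrow> ev i \<in> Vn n"
  by (simp add: Vn_def ev_def)

lemma act_add: "act n M (f + g) = act n M f + act n M g"
  by (auto simp: act_def algebra_simps sum.distrib)
lemma act_diff: "act n M (f - g) = act n M f - act n M g"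
  by (auto simp: act_def algebra_simps sum_subtractf)
lemma act_sc: "act n M (sc c f) = sc c (act n M f)"
  by (auto simp: act_def sc_def sum_distrib_left algebra_simps)
lemma act_uminus: "act n M (- f) = - act n M f"
  by (auto simp: act_def sum_negf)
lemma act_zero: "act n M 0 = 0"
  by (auto simp: act_def)

lemma mat_mult_entry:
  assumes "A \<in> carrier_mat n n" "B \<in> carrier_mat n n" "i < n" "j < n"
  shows "(A * B) $$ (i, j) = (\<Sum>l<n. A $$ (i, l) * B $$ (l, j))"
  using assms by (simp add: index_mult_mat scalar_prod_def atLeast0LessThan)

lemma act_mult:
  assumes "A \<in> carrier_mat n n" "B \<in> carrier_mat n n"
  shows "act n (A * B) f = act n A (act n B f)"
proof
  fix i show "act n (A * B) f i = act n A (act n B f) i"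
  proof (cases "i < n")
    case True
    have "act n (A * B) f i = (\<Sum>j<n. (A * B) $$ (i, j) * f j)"
      using True by (simp add: act_def del: index_mult_mat)
    also have "\<dots> = (\<Sum>j<n. (\<Sum>l<n. A $$ (i, l) * B $$ (l, j)) * f j)"
      by (rule sum.cong[OF refl], subst mat_mult_entry[OF assms True]) auto
    also have "\<dots> = (\<Sum>j<n. \<Sum>l<n. A $$ (i, l) * (B $$ (l, j) * f j))"
      by (simp add: sum_distrib_right mult.assoc)
    also have "\<dots> = (\<Sum>l<n. \<Sum>j<n. A $$ (i, l) * (B $$ (l, j) * f j))"
      by (rule sum.swap)
    also have "\<dots> = act n A (act n B f) i"
      using True by (simp add: act_def sum_distrib_left)
    finally show ?thesis .
  qed (simp add: act_def)
qed

lemma act_one: "f \<in> Vn n \<Longrightarrow> act n (1\<^sub>m n) f = f"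
proof
  fix i assume f: "f \<in> Vn n"
  show "act n (1\<^sub>m n) f i = f i"
  proof (cases "i < n")
    case True
    have "act n (1\<^sub>m n) f i = (\<Sum>j<n. (if i = j then 1 else 0) * f j)"
      using True by (simp add: act_def)
    also have "\<dots> = (\<Sum>j<n. if i = j then f j else 0)"
      by (rule sum.cong) auto
    also have "\<dots> = f i" using True by (simp add: sum.delta)
    finally show ?thesis .
  qed (use f in \<open>simp add: act_def Vn_def\<close>)
qed

lemma Rg_Vn: "Rg n M \<subseteq> Vn n"
  by (auto simp: Rg_def)

lemma Rg_subspace: "FV.subspace (Rg n M)"
  unfolding FV.subspace_def
proof (intro conjI ballI allI)
  show "0 \<in> Rg n M" unfolding Rg_def by (rule CollectI, rule exI[of _ 0]) (simp add: act_zero)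
next
  fix x y assume "x \<in> Rg n M" "y \<in> Rg n M"
  then obtain f g where "x = act n M f - f" "f \<in> Vn n" "y = act n M g - g" "g \<in> Vn n"
    by (auto simp: Rg_def)
  then show "x + y \<in> Rg n M" unfolding Rg_def
    by (intro CollectI exI[of _ "f + g"]) (simp add: act_add algebra_simps)
next
  fix c x assume "x \<in> Rg n M"
  then obtain f where "x = act n M f - f" "f \<in> Vn n"
    by (auto simp: Rg_def)
  moreover have "act n M (sc c f) - sc c f = sc c (act n M f - f)"
    by (simp only: act_sc) (simp add: sc_def fun_eq_iff algebra_simps)
  ultimately have "act n M (sc c f) - sc c f = sc c x" by simp
  then show "sc c x \<in> Rg n M" unfolding Rg_def using \<open>f \<in> Vn n\<close>
    by (intro CollectI exI[of _ "sc c f"]) auto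
qed

lemma Rg_mult:
  assumes "A \<in> carrier_mat n n" "B \<in> carrier_mat n n"
  shows "Rg n (A * B) \<subseteq> FV.span (Rg n A \<union> Rg n B)"
proof
  fix x assume "x \<in> Rg n (A * B)"
  then obtain f where f: "x = act n (A * B) f - f" "f \<in> Vn n" by (auto simp: Rg_def)
  have "x = (act n A (act n B f) - act n B f) + (act n B f - f)"
    using f assms by (simp add: act_mult)
  moreover have "act n A (act n B f) - act n B f \<in> Rg n A" by (auto simp: Rg_def)
  moreover have "act n B f - f \<in> Rg n B" using f by (auto simp: Rg_def)
  ultimately show "x \<in> FV.span (Rg n A \<union> Rg n B)"
    by (metis FV.span_add FV.span_base UnI1 UnI2)
qed

lemma rho_mult:
  assumes "A \<in> carrier_mat n n" "B \<in> carrier_mat n n"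
  shows "rho n (A * B) \<le> rho n A + rho n B"
  unfolding rho_def by (rule dim_sum_le[OF Rg_Vn Rg_Vn Rg_mult[OF assms]])

lemma Rg_one: "Rg n (1\<^sub>m n) = {0}"
  by (auto simp: Rg_def act_one intro!: exI[of _ 0])

lemma rho_one: "rho n (1\<^sub>m n) = 0"
proof -
  have "FV.dim {0::nat\<Rightarrow>complex} \<le> card ({}::(nat\<Rightarrow>complex) set)"
    by (rule FV.dim_le_card) auto
  then show ?thesis by (simp add: rho_def Rg_one)
qed

lemma refls_Gdd: "refls d n \<subseteq> Gdd d n" by (auto simp: refls_def)
lemma Gdd_carrier: "Gdd d n \<subseteq> carrier_mat n n" by (auto simp: Gdd_def)

lemma scalar_prod_vec: "a \<in> carrier_vec n \<Longrightarrow> a \<bullet> vec n f = (\<Sum>i<n. a $ i * f i)"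
  by (simp add: scalar_prod_def atLeast0LessThan)

lemma mult_vec_index: "M \<in> carrier_mat n n \<Longrightarrow> i < n \<Longrightarrow> (M *\<^sub>v vec n f) $ i = (\<Sum>j<n. M $$ (i, j) * f j)"
  by (simp add: scalar_prod_def atLeast0LessThan)

lemma refl_fix:
  assumes r: "r \<in> carrier_mat n n" and a: "a \<in> carrier_vec n"
    and fx: "\<forall>v\<in>carrier_vec n. a \<bullet> v = 0 \<longrightarrow> r *\<^sub>v v = v"
    and f: "f \<in> Vn n" and z: "(\<Sum>i<n. a $ i * f i) = 0"
  shows "act n r f = f"
proof
  fix i
  have "r *\<^sub>v vec n f = vec n f" using fx z a by (simp add: scalar_prod_vec)
  then have e: "i < n \<Longrightarrow> (r *\<^sub>v vec n f) $ i = f i" by (metis index_vec)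
  show "act n r f i = f i"
  proof (cases "i < n")
    case True
    then have "act n r f i = (r *\<^sub>v vec n f) $ i" using r by (simp only: mult_vec_index act_def if_True)
    then show ?thesis using e True by simp
  qed (use f in \<open>simp add: act_def Vn_def\<close>)
qed

lemma rho_refl:
  assumes "r \<in> refls d n"
  shows "rho n r \<le> 1"
proof -
  have r: "r \<in> carrier_mat n n" using assms refls_Gdd Gdd_carrier by blast
  obtain a where a: "a \<in> carrier_vec n" "a \<noteq> 0\<^sub>v n"
    and fx: "\<forall>v\<in>carrier_vec n. a \<bullet> v = 0 \<longrightarrow> r *\<^sub>v v = v"
    using assms by (auto simp: refls_def)
  obtain p where p: "p < n" "a $ p \<noteq> 0" using a by (metis eq_vecI index_zero_vec(1,2) carrier_vecD)
  define q where "q = act n r (ev p) - ev p"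
  have "Rg n r \<subseteq> FV.span {q}"
  proof
    fix x assume "x \<in> Rg n r"
    then obtain f where f: "x = act n r f - f" "f \<in> Vn n" by (auto simp: Rg_def)
    define s where "s = (\<Sum>i<n. a $ i * f i) / a $ p"
    define g where "g = f - sc s (ev p)"
    have gV: "g \<in> Vn n" using f p by (simp add: g_def)
    have "(\<Sum>i<n. a $ i * g i) = (\<Sum>i<n. a $ i * f i) - (\<Sum>i<n. a $ i * (s * ev p i))"
      by (simp add: g_def sc_def algebra_simps sum_subtractf)
    also have "(\<Sum>i<n. a $ i * (s * ev p i)) = (\<Sum>i<n. if i = p then a $ p * s else 0)"
      by (rule sum.cong) (auto simp: ev_def)
    also have "\<dots> = a $ p * s" using p by simp
    finally have "(\<Sum>i<n. a $ i * g i) = 0" using p by (simp add: s_def)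
    then have "act n r g = g" using refl_fix[OF r a(1) fx gV] by simp
    have fg: "f = g + sc s (ev p)" by (simp add: g_def)
    have "x = act n r (g + sc s (ev p)) - (g + sc s (ev p))" using f(1) fg by simp
    also have "\<dots> = (act n r g - g) + (sc s (act n r (ev p)) - sc s (ev p))"
      by (simp add: act_add act_sc algebra_simps)
    finally have "x = (act n r g - g) + (sc s (act n r (ev p)) - sc s (ev p))" .
    then have "x = sc s q"
      using \<open>act n r g = g\<close> by (simp add: q_def sc_def fun_eq_iff algebra_simps)
    then show "x \<in> FV.span {q}" by (simp add: FV.span_scale FV.span_base)
  qed
  then have "FV.dim (Rg n r) \<le> card {q}" by (intro FV.dim_le_card) auto
  then show ?thesis by (simp add: rho_def)
qed

lemma mprod_Cons[simp]: "mprod n (r # rs) = r * mprod n rs" by (simp add: mprod_def)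
lemma mprod_Nil[simp]: "mprod n [] = 1\<^sub>m n" by (simp add: mprod_def)

lemma mprod_carrier: "set rs \<subseteq> carrier_mat n n \<Longrightarrow> mprod n rs \<in> carrier_mat n n"
  by (induction rs) auto

lemma rho_mprod: "set rs \<subseteq> refls d n \<Longrightarrow> rho n (mprod n rs) \<le> length rs"
proof (induction rs)
  case Nil then show ?case by (simp add: rho_one)
next
  case (Cons r rs)
  have c: "set rs \<subseteq> carrier_mat n n" "r \<in> carrier_mat n n"
    using Cons.prems refls_Gdd[of d n] Gdd_carrier[of d n] by auto
  have "rho n (mprod n (r # rs)) \<le> rho n r + rho n (mprod n rs)"
    using rho_mult[OF c(2) mprod_carrier[OF c(1)]] by simp
  also have "\<dots> \<le> 1 + length rs" using Cons rho_refl by (meson add_mono list.set_intros(1) set_subset_Cons subset_trans subset_code(1))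
  finally show ?case by simp
qed

definition factors :: "nat \<Rightarrow> nat \<Rightarrow> complex mat \<Rightarrow> bool" where
  "factors d n g \<longleftrightarrow> (\<exists>rs. set rs \<subseteq> refls d n \<and> mprod n rs = g)"

lemma absl_le: "set rs \<subseteq> refls d n \<Longrightarrow> absl d n (mprod n rs) \<le> length rs"
  unfolding absl_def by (rule Least_le) blast

lemma absl_ex:
  assumes "factors d n g"
  obtains rs where "set rs \<subseteq> refls d n" "mprod n rs = g" "length rs = absl d n g"
proof -
  have "\<exists>m rs. set rs \<subseteq> refls d n \<and> length rs = m \<and> mprod n rs = g"
    using assms by (auto simp: factors_def)
  then have "\<exists>rs. set rs \<subseteq> refls d n \<and> length rs = absl d n g \<and> mprod n rs = g"
    unfolding absl_def by (rule LeastI_ex)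
  then show ?thesis using that by blast
qed

lemma rho_le_absl: "factors d n g \<Longrightarrow> rho n g \<le> absl d n g"
  by (metis absl_ex rho_mprod)

lemma absl_one: "absl d n (1\<^sub>m n) = 0"
  using absl_le[of "[]" d n] by simp


definition tr :: "nat \<Rightarrow> nat \<Rightarrow> nat \<Rightarrow> nat" where
  "tr i j b = (if b = i then j else if b = j then i else b)"

definition monm :: "nat \<Rightarrow> (nat \<Rightarrow> nat) \<Rightarrow> (nat \<Rightarrow> complex) \<Rightarrow> complex mat" where
  "monm n \<pi> c = mat n n (\<lambda>(a, b). if a = \<pi> b then c b else 0)"

definition swc :: "nat \<Rightarrow> nat \<Rightarrow> complex \<Rightarrow> nat \<Rightarrow> complex" where
  "swc i j c b = (if b = i then c else if b = j then inverse c else 1)"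

definition swapm :: "nat \<Rightarrow> nat \<Rightarrow> nat \<Rightarrow> complex \<Rightarrow> complex mat" where
  "swapm n i j c = monm n (tr i j) (swc i j c)"

lemma monm_carrier[simp]: "monm n \<pi> c \<in> carrier_mat n n"
  by (simp add: monm_def)
lemma monm_dims[simp]: "dim_row (monm n \<pi> c) = n" "dim_col (monm n \<pi> c) = n"
  by (simp_all add: monm_def)
lemma monm_index: "a < n \<Longrightarrow> b < n \<Longrightarrow> monm n \<pi> c $$ (a, b) = (if a = \<pi> b then c b else 0)"
  by (simp add: monm_def)

lemma monm_mult:
  assumes "\<forall>j<n. \<sigma> j < n"
  shows "monm n \<pi> c * monm n \<sigma> e = monm n (\<pi> \<circ> \<sigma>) (\<lambda>j. c (\<sigma> j) * e j)"
proof (rule eq_matI)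
  fix a b assume ab: "a < dim_row (monm n (\<pi> \<circ> \<sigma>) (\<lambda>j. c (\<sigma> j) * e j))"
    "b < dim_col (monm n (\<pi> \<circ> \<sigma>) (\<lambda>j. c (\<sigma> j) * e j))"
  then have ab': "a < n" "b < n" by auto
  have "(monm n \<pi> c * monm n \<sigma> e) $$ (a, b)
      = (\<Sum>l<n. (if a = \<pi> l then c l else 0) * (if l = \<sigma> b then e b else 0))"
    unfolding mat_mult_entry[OF monm_carrier monm_carrier ab'] by (intro sum.cong) (use ab' in \<open>auto simp: monm_index\<close>)
  also have "\<dots> = (\<Sum>l<n. if l = \<sigma> b then (if a = \<pi> l then c l * e b else 0) else 0)"
    by (rule sum.cong) auto
  also have "\<dots> = (if a = \<pi> (\<sigma> b) then c (\<sigma> b) * e b else 0)"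
    using assms ab' by (simp add: sum.delta')
  finally show "(monm n \<pi> c * monm n \<sigma> e) $$ (a, b) = monm n (\<pi> \<circ> \<sigma>) (\<lambda>j. c (\<sigma> j) * e j) $$ (a, b)"
    using ab' by (simp add: monm_index)
qed auto

lemma Gdd_mono:
  assumes "M \<in> Gdd d n"
  obtains \<pi> c where "bij_betw \<pi> {..<n} {..<n}" "M = monm n \<pi> c"
    "\<forall>j<n. c j \<noteq> 0 \<and> c j ^ d = 1" "(\<Prod>j<n. c j) = 1"
proof -
  obtain \<pi> where M: "M \<in> carrier_mat n n" "bij_betw \<pi> {..<n} {..<n}"
    "\<forall>i<n. \<forall>j<n. M $$ (i, j) \<noteq> 0 \<longleftrightarrow> i = \<pi> j"
    "\<forall>j<n. (M $$ (\<pi> j, j)) ^ d = 1" "(\<Prod>j<n. M $$ (\<pi> j, j)) = 1"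
    using assms by (auto simp: Gdd_def)
  define c where "c j = M $$ (\<pi> j, j)" for j
  have pj: "j < n \<Longrightarrow> \<pi> j < n" for j using M(2) by (auto simp: bij_betw_def)
  have "M = monm n \<pi> c"
  proof (rule eq_matI)
    fix i j assume "i < dim_row (monm n \<pi> c)" "j < dim_col (monm n \<pi> c)"
    then have ij: "i < n" "j < n" by auto
    show "M $$ (i, j) = monm n \<pi> c $$ (i, j)"
      using M(3) ij by (auto simp: monm_index c_def)
  qed (use M in auto)
  moreover have "\<forall>j<n. c j \<noteq> 0 \<and> c j ^ d = 1" using M(3,4) pj by (auto simp: c_def)
  moreover have "(\<Prod>j<n. c j) = 1" using M(5) by (simp add: c_def)
  ultimately show ?thesis using that M(2) by blast
qed

lemma monm_Gdd:
  assumes "bij_betw \<pi> {..<n} {..<n}" "\<forall>j<n. c j \<noteq> 0 \<and> c j ^ d = 1" "(\<Prod>j<n. c j) = 1"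
  shows "monm n \<pi> c \<in> Gdd d n"
proof -
  have pj: "j < n \<Longrightarrow> \<pi> j < n" for j using assms(1) by (auto simp: bij_betw_def)
  show ?thesis unfolding Gdd_def
    by (rule CollectI, rule conjI, simp, rule exI[of _ \<pi>]) (use assms pj in \<open>auto simp: monm_index\<close>)
qed

lemma bij_lt: "bij_betw \<pi> {..<n} {..<n} \<Longrightarrow> j < n \<Longrightarrow> \<pi> j < n"
  by (auto simp: bij_betw_def)

lemma Gdd_mult:
  assumes "A \<in> Gdd d n" "B \<in> Gdd d n"
  shows "A * B \<in> Gdd d n"
proof -
  obtain \<pi> c where A: "bij_betw \<pi> {..<n} {..<n}" "A = monm n \<pi> c"
    "\<forall>j<n. c j \<noteq> 0 \<and> c j ^ d = 1" "(\<Prod>j<n. c j) = 1"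
    using Gdd_mono[OF assms(1)] by blast
  obtain \<sigma> e where B: "bij_betw \<sigma> {..<n} {..<n}" "B = monm n \<sigma> e"
    "\<forall>j<n. e j \<noteq> 0 \<and> e j ^ d = 1" "(\<Prod>j<n. e j) = 1"
    using Gdd_mono[OF assms(2)] by blast
  have AB: "A * B = monm n (\<pi> \<circ> \<sigma>) (\<lambda>j. c (\<sigma> j) * e j)"
    using A(2) B(2) monm_mult bij_lt[OF B(1)] by blast
  have p: "(\<Prod>j<n. c (\<sigma> j)) = (\<Prod>j<n. c j)"
    using prod.reindex_bij_betw[OF B(1)] by blast
  show ?thesis unfolding AB
  proof (rule monm_Gdd)
    show "bij_betw (\<pi> \<circ> \<sigma>) {..<n} {..<n}" using A(1) B(1) bij_betw_trans by blast
    show "\<forall>j<n. c (\<sigma> j) * e j \<noteq> 0 \<and> (c (\<sigma> j) * e j) ^ d = 1"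
      using A(3) B(3) bij_lt[OF B(1)] by (simp add: power_mult_distrib)
    show "(\<Prod>j<n. c (\<sigma> j) * e j) = 1" using A(4) B(4) p by (simp add: prod.distrib)
  qed
qed

lemma one_mono: "1\<^sub>m n = monm n id (\<lambda>_. 1)"
  by (rule eq_matI) (auto simp: monm_index)

lemma Gdd_one: "1\<^sub>m n \<in> Gdd d n"
  unfolding one_mono by (rule monm_Gdd) auto

lemma act_monm_ev:
  assumes "j < n" "\<pi> j < n"
  shows "act n (monm n \<pi> c) (ev j) = sc (c j) (ev (\<pi> j))"
proof
  fix a show "act n (monm n \<pi> c) (ev j) a = sc (c j) (ev (\<pi> j)) a"
  proof (cases "a < n")
    case True
    have "act n (monm n \<pi> c) (ev j) a = (\<Sum>l<n. (if a = \<pi> l then c l else 0) * ev j l)"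
      using True by (simp add: act_def monm_index)
    also have "\<dots> = (\<Sum>l<n. if l = j then (if a = \<pi> l then c l else 0) else 0)"
      by (rule sum.cong) (auto simp: ev_def)
    also have "\<dots> = (if a = \<pi> j then c j else 0)" using assms by (simp add: sum.delta')
    finally show ?thesis by (simp add: sc_def ev_def)
  qed (use assms in \<open>auto simp: act_def sc_def ev_def\<close>)
qed

lemma sc_ev_eq: "sc c (ev p) = ev q \<longleftrightarrow> c = 1 \<and> p = q"
proof
  assume h: "sc c (ev p) = ev q"
  then have "sc c (ev p) q = ev q q" by simp
  then have "c * (if q = p then 1 else 0) = 1" by (simp add: sc_def ev_def)
  then show "c = 1 \<and> p = q" by (auto split: if_splits)
qed (simp add: sc_def fun_eq_iff)

lemma sc_sc: "sc a (sc b f) = sc (a * b) f" by (simp add: sc_def fun_eq_iff)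
lemma sc_one[simp]: "sc 1 f = f" by (simp add: sc_def)

lemma tr_simps[simp]: "tr i j i = j" "tr i j j = i" "b \<noteq> i \<Longrightarrow> b \<noteq> j \<Longrightarrow> tr i j b = b"
  by (auto simp: tr_def)

lemma tr_lt: "i < n \<Longrightarrow> j < n \<Longrightarrow> b < n \<Longrightarrow> tr i j b < n" by (simp add: tr_def)
lemma tr_tr[simp]: "tr i j (tr i j b) = b" by (simp add: tr_def)

lemma tr_bij: "i < n \<Longrightarrow> j < n \<Longrightarrow> bij_betw (tr i j) {..<n} {..<n}"
  by (rule bij_betw_byWitness[of _ "tr i j"]) (auto simp: tr_lt)

lemma swc_simps[simp]: "i \<noteq> j \<Longrightarrow> swc i j c i = c" "i \<noteq> j \<Longrightarrow> swc i j c j = inverse c"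
  "b \<noteq> i \<Longrightarrow> b \<noteq> j \<Longrightarrow> swc i j c b = 1"
  by (auto simp: swc_def)

lemma prod_two:
  assumes "i < n" "j < n" "i \<noteq> j"
  shows "(\<Prod>b<n. (f :: nat \<Rightarrow> complex) b) = f i * f j * (\<Prod>b\<in>{..<n} - {i, j}. f b)"
proof -
  have e: "{..<n} = insert i (insert j ({..<n} - {i, j}))" using assms by auto
  have "(\<Prod>b<n. f b) = prod f (insert i (insert j ({..<n} - {i, j})))"
    using arg_cong[of _ _ "prod f", OF e] .
  also have "\<dots> = f i * (f j * prod f ({..<n} - {i, j}))"
    using assms by (simp add: prod.insert)
  finally show ?thesis by (simp add: mult.assoc)
qed

lemma sum_two:
  assumes "i < n" "j < n" "i \<noteq> j"
  shows "(\<Sum>b<n. (f :: nat \<Rightarrow> complex) b) = f i + f j + (\<Sum>b\<in>{..<n} - {i, j}. f b)"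
proof -
  have e: "{..<n} = insert i (insert j ({..<n} - {i, j}))" using assms by auto
  have "(\<Sum>b<n. f b) = sum f (insert i (insert j ({..<n} - {i, j})))"
    using arg_cong[of _ _ "sum f", OF e] .
  also have "\<dots> = f i + (f j + sum f ({..<n} - {i, j}))"
    using assms by (simp add: sum.insert)
  finally show ?thesis by (simp add: add.assoc)
qed

lemma swapm_Gdd:
  assumes "i < n" "j < n" "i \<noteq> j" "c ^ d = 1" "d \<ge> 1"
  shows "swapm n i j c \<in> Gdd d n"
  unfolding swapm_def
proof (rule monm_Gdd)
  have c0: "c \<noteq> 0" using assms(4,5) by (metis one_neq_zero power_0_left not_one_le_zero le_0_eq)
  show "bij_betw (tr i j) {..<n} {..<n}" using tr_bij assms by blast
  show "\<forall>b<n. swc i j c b \<noteq> 0 \<and> swc i j c b ^ d = 1"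
    using c0 assms by (auto simp: swc_def power_inverse)
  have "(\<Prod>b<n. swc i j c b) = swc i j c i * swc i j c j * (\<Prod>b\<in>{..<n} - {i, j}. swc i j c b)"
    by (rule prod_two[OF assms(1-3)])
  also have "(\<Prod>b\<in>{..<n} - {i, j}. swc i j c b) = 1" by (rule prod.neutral) auto
  finally show "(\<Prod>b<n. swc i j c b) = 1" using c0 assms(3) by simp
qed

lemma monm_vec:
  assumes "bij_betw \<pi> {..<n} {..<n}" "v \<in> carrier_vec n" "j < n"
  shows "(monm n \<pi> c *\<^sub>v v) $ (\<pi> j) = c j * v $ j"
proof -
  have pj: "\<pi> j < n" using bij_lt assms by blast
  have inj: "l < n \<Longrightarrow> \<pi> j = \<pi> l \<longleftrightarrow> l = j" for l
    using assms(1,3) by (auto simp: bij_betw_def inj_on_def)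
  have "(monm n \<pi> c *\<^sub>v v) $ (\<pi> j) = (\<Sum>l<n. monm n \<pi> c $$ (\<pi> j, l) * v $ l)"
    using pj assms(2) by (simp add: scalar_prod_def atLeast0LessThan)
  also have "\<dots> = (\<Sum>l<n. if l = j then c l * v $ l else 0)"
    using pj inj by (intro sum.cong) (auto simp: monm_index)
  also have "\<dots> = c j * v $ j" using assms by simp
  finally show ?thesis .
qed

lemma swapm_refl:
  assumes "i < n" "j < n" "i \<noteq> j" "c ^ d = 1" "d \<ge> 1"
  shows "swapm n i j c \<in> refls d n"
proof -
  have c0: "c \<noteq> 0" using assms(4,5) by (metis one_neq_zero power_0_left not_one_le_zero le_0_eq)
  have G: "swapm n i j c \<in> Gdd d n" using swapm_Gdd assms by blast
  have ne: "swapm n i j c \<noteq> 1\<^sub>m n"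
  proof
    assume "swapm n i j c = 1\<^sub>m n"
    then have "swapm n i j c $$ (i, i) = 1\<^sub>m n $$ (i, i)" by simp
    then show False using assms by (simp add: swapm_def monm_index tr_def)
  qed
  define a where "a = vec n (\<lambda>l. if l = i then c else if l = j then -1 else (0::complex))"
  have a: "a \<in> carrier_vec n" by (simp add: a_def)
  have a0: "a \<noteq> 0\<^sub>v n"
  proof
    assume "a = 0\<^sub>v n"
    then have "a $ j = 0\<^sub>v n $ j" by simp
    then show False using assms by (simp add: a_def)
  qed
  have fx: "swapm n i j c *\<^sub>v v = v" if v: "v \<in> carrier_vec n" "a \<bullet> v = 0" for v
  proof -
    have "a \<bullet> v = (\<Sum>l<n. a $ l * v $ l)" using v by (simp add: scalar_prod_def atLeast0LessThan)
    also have "\<dots> = a $ i * v $ i + a $ j * v $ j + (\<Sum>l\<in>{..<n} - {i, j}. a $ l * v $ l)"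
      by (rule sum_two[OF assms(1-3)])
    also have "(\<Sum>l\<in>{..<n} - {i, j}. a $ l * v $ l) = 0" by (rule sum.neutral) (auto simp: a_def)
    finally have e: "c * v $ i = v $ j" using v assms by (simp add: a_def)
    show ?thesis
    proof (rule eq_vecI)
      show "dim_vec (swapm n i j c *\<^sub>v v) = dim_vec v" using v by (simp add: swapm_def)
      fix l assume "l < dim_vec v"
      then have l: "l < n" using v by simp
      have "(swapm n i j c *\<^sub>v v) $ (tr i j (tr i j l)) = swc i j c (tr i j l) * v $ (tr i j l)"
        unfolding swapm_def by (rule monm_vec[OF tr_bij[OF assms(1,2)] v(1) tr_lt[OF assms(1,2) l]])
      then have h: "(swapm n i j c *\<^sub>v v) $ l = swc i j c (tr i j l) * v $ (tr i j l)" by simp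
      consider "l = i" | "l = j" | "l \<noteq> i \<and> l \<noteq> j" by blast
      then show "(swapm n i j c *\<^sub>v v) $ l = v $ l"
      proof cases
        case 1
        then have "(swapm n i j c *\<^sub>v v) $ l = inverse c * v $ j" using h assms(3) by simp
        then show ?thesis using c0 1 by (simp add: e[symmetric])
      next
        case 2
        then have "(swapm n i j c *\<^sub>v v) $ l = c * v $ i" using h assms(3) by simp
        then show ?thesis using e 2 by simp
      next
        case 3
        then show ?thesis using h by simp
      qed
    qed
  qed
  show ?thesis unfolding refls_def using G ne a a0 fx by blast
qed

lemma monm_cong:
  assumes "\<forall>b<n. \<pi> b = \<pi>' b \<and> c b = c' b"
  shows "monm n \<pi> c = monm n \<pi>' c'"
  by (rule eq_matI) (use assms in \<open>auto simp: monm_index\<close>)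

lemma swapm_invol:
  assumes "i < n" "j < n" "i \<noteq> j" "c \<noteq> 0"
  shows "swapm n i j c * swapm n i j c = 1\<^sub>m n"
proof -
  have "swapm n i j c * swapm n i j c = monm n (tr i j \<circ> tr i j) (\<lambda>b. swc i j c (tr i j b) * swc i j c b)"
    unfolding swapm_def by (rule monm_mult) (use assms in \<open>auto simp: tr_lt\<close>)
  also have "\<dots> = monm n id (\<lambda>_. 1)"
  proof (rule monm_cong, intro allI impI conjI)
    fix b assume "b < n"
    show "(tr i j \<circ> tr i j) b = id b" by simp
    show "swc i j c (tr i j b) * swc i j c b = 1"
      using assms by (cases "b = i"; cases "b = j") auto
  qed
  finally show ?thesis by (simp add: one_mono)
qed

lemma act_swapm_ev:
  assumes "i < n" "j < n" "b < n"
  shows "act n (swapm n i j c) (ev b) = sc (swc i j c b) (ev (tr i j b))"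
  unfolding swapm_def by (rule act_monm_ev) (use assms in \<open>auto simp: tr_lt\<close>)


definition SW :: "nat \<Rightarrow> nat \<Rightarrow> complex mat set" where
  "SW d n = {swapm n i j c | i j c. i < n \<and> j < n \<and> i \<noteq> j \<and> c ^ d = 1}"

lemma SW_refls: "d \<ge> 1 \<Longrightarrow> SW d n \<subseteq> refls d n"
  by (auto simp: SW_def intro: swapm_refl)

lemma SW_carrier: "SW d n \<subseteq> carrier_mat n n"
  by (auto simp: SW_def swapm_def)

definition NF :: "nat \<Rightarrow> complex mat \<Rightarrow> nat set" where
  "NF n g = {b. b < n \<and> act n g (ev b) \<noteq> ev b}"

lemma invol_cancel:
  fixes r g :: "complex mat"
  assumes "r \<in> carrier_mat n n" "r * r = 1\<^sub>m n" "g \<in> carrier_mat n n"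
  shows "r * (r * g) = g"
proof -
  have "r * (r * g) = (r * r) * g" by (rule assoc_mult_mat[symmetric]) (use assms in auto)
  then show ?thesis using assms left_mult_one_mat[of g n n] by simp
qed

lemma c_ne0: "d \<ge> 1 \<Longrightarrow> (c::complex) ^ d = 1 \<Longrightarrow> c \<noteq> 0"
  by (metis one_neq_zero power_0_left not_one_le_zero le_0_eq)

lemma generation:
  assumes "d \<ge> 1"
  shows "g \<in> Gdd d n \<Longrightarrow> \<exists>rs. set rs \<subseteq> SW d n \<and> mprod n rs = g"
proof (induction "card (NF n g)" arbitrary: g rule: less_induct)
  case less
  obtain \<pi> c where g: "bij_betw \<pi> {..<n} {..<n}" "g = monm n \<pi> c"
    "\<forall>j<n. c j \<noteq> 0 \<and> c j ^ d = 1" "(\<Prod>j<n. c j) = 1"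
    by (rule Gdd_mono[OF less.prems]) blast
  have gc: "g \<in> carrier_mat n n" using g by simp
  have col: "b < n \<Longrightarrow> act n g (ev b) = sc (c b) (ev (\<pi> b))" for b
    using act_monm_ev[of b n \<pi> c] bij_lt[OF g(1), of b] g(2) by simp
  have inj: "a < n \<Longrightarrow> b < n \<Longrightarrow> \<pi> a = \<pi> b \<Longrightarrow> a = b" for a b
    using g(1) by (auto simp: bij_betw_def inj_on_def)
  have fin: "finite (NF n g)" by (simp add: NF_def)
  have fixb: "b < n \<Longrightarrow> b \<notin> NF n g \<Longrightarrow> \<pi> b = b \<and> c b = 1" for b
    using col[of b] sc_ev_eq[of "c b" "\<pi> b" b] by (auto simp: NF_def)
  show ?case
  proof (cases "NF n g = {}")
    case True
    have "g = monm n id (\<lambda>_. 1)" unfolding g(2)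
      by (rule monm_cong) (use fixb True in auto)
    then have "g = mprod n []" by (simp add: one_mono)
    then show ?thesis by (intro exI[of _ "[]"]) simp
  next
    case False
    show ?thesis
    proof (cases "\<exists>j\<in>NF n g. \<pi> j \<noteq> j")
      case True
      then obtain j where j: "j \<in> NF n g" "\<pi> j \<noteq> j" by blast
      define i where "i = \<pi> j"
      have jn: "j < n" using j by (simp add: NF_def)
      have ineq: "i \<noteq> j" "i < n" using j jn bij_lt[OF g(1)] by (auto simp: i_def)
      have cj: "c j \<noteq> 0" "c j ^ d = 1" using g(3) jn by auto
      define r where "r = swapm n i j (inverse (c j))"
      have "(inverse (c j)) ^ d = 1" using cj by (simp add: power_inverse)
      then have rSW: "r \<in> SW d n" unfolding r_def SW_def using ineq jn by blast
      have rG: "r \<in> Gdd d n" using rSW SW_refls[OF assms] refls_Gdd by blast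
      have rc: "r \<in> carrier_mat n n" using rSW SW_carrier by blast
      have rr: "r * r = 1\<^sub>m n" unfolding r_def using ineq jn cj by (intro swapm_invol) auto
      define g' where "g' = r * g"
      have g'G: "g' \<in> Gdd d n" using Gdd_mult[OF rG less.prems] by (simp add: g'_def)
      have sub: "NF n g' \<subseteq> NF n g - {j}"
      proof
        fix b assume b: "b \<in> NF n g'"
        then have bn: "b < n" by (simp add: NF_def)
        have ag': "act n g' (ev b) = act n r (act n g (ev b))"
          unfolding g'_def using rc gc by (rule act_mult)
        show "b \<in> NF n g - {j}"
        proof (rule ccontr)
          assume "b \<notin> NF n g - {j}"
          then have "b \<notin> NF n g \<or> b = j" by blast
          then have "act n g' (ev b) = ev b"
          proof
            assume bj: "b = j"
            have "act n g' (ev b) = act n r (sc (c j) (ev i))" using ag' col bj jn by (simp add: i_def)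
            also have "\<dots> = sc (c j) (act n r (ev i))" by (simp add: act_sc)
            also have "act n r (ev i) = sc (inverse (c j)) (ev j)"
              unfolding r_def using ineq jn by (simp add: act_swapm_ev)
            finally show ?thesis using cj bj by (simp add: sc_sc)
          next
            assume bN: "b \<notin> NF n g"
            have bj: "b \<noteq> j" using bN j by blast
            have bi: "b \<noteq> i"
            proof
              assume "b = i"
              then have "\<pi> i = i" using fixb bN bn by blast
              then have "i = j" using inj[of i j] ineq jn by (simp add: i_def)
              then show False using ineq by simp
            qed
            have "act n g (ev b) = ev b" using bN bn by (simp add: NF_def)
            then have "act n g' (ev b) = act n r (ev b)" using ag' by simp
            also have "\<dots> = ev b" unfolding r_def using ineq jn bn bi bj by (simp add: act_swapm_ev)
            finally show ?thesis .
          qed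
          then show False using b by (simp add: NF_def)
        qed
      qed
      have "NF n g' \<subset> NF n g" using sub j by blast
      then have "card (NF n g') < card (NF n g)" by (rule psubset_card_mono[OF fin])
      then obtain rs where rs: "set rs \<subseteq> SW d n" "mprod n rs = g'" using less(1)[OF _ g'G] by blast
      have "mprod n (r # rs) = g" using rs invol_cancel[OF rc rr gc] by (simp add: g'_def)
      moreover have "set (r # rs) \<subseteq> SW d n" using rs rSW by simp
      ultimately show ?thesis by blast
    next
      case False2: False
      then have pid: "b < n \<Longrightarrow> \<pi> b = b" for b using fixb by blast
      obtain j where j: "j \<in> NF n g" using False by blast
      have jn: "j < n" using j by (simp add: NF_def)
      have cj1: "c j \<noteq> 1" using j col[OF jn] pid[OF jn] by (auto simp: NF_def)
      have cj: "c j \<noteq> 0" "c j ^ d = 1" using g(3) jn by auto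
      have "\<exists>l. l < n \<and> l \<noteq> j \<and> c l \<noteq> 1"
      proof (rule ccontr)
        assume "\<not> (\<exists>l. l < n \<and> l \<noteq> j \<and> c l \<noteq> 1)"
        then have all: "\<forall>l<n. l \<noteq> j \<longrightarrow> c l = 1" by blast
        have "(\<Prod>b<n. c b) = c j * (\<Prod>b\<in>{..<n} - {j}. c b)"
          using jn by (subst prod.remove[of _ j]) auto
        also have "(\<Prod>b\<in>{..<n} - {j}. c b) = 1" using all by (intro prod.neutral) auto
        finally show False using g(4) cj1 by simp
      qed
      then obtain l where l: "l < n" "l \<noteq> j" "c l \<noteq> 1" by blast
      have lN: "l \<in> NF n g" using l col[OF l(1)] pid[OF l(1)] sc_ev_eq by (auto simp: NF_def)
      define r1 where "r1 = swapm n j l 1"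
      define r2 where "r2 = swapm n l j (inverse (c j))"
      have "(1::complex) ^ d = 1" by simp
      then have r1SW: "r1 \<in> SW d n" unfolding r1_def SW_def using l jn by blast
      have "(inverse (c j)) ^ d = 1" using cj by (simp add: power_inverse)
      then have r2SW: "r2 \<in> SW d n" unfolding r2_def SW_def using l jn by blast
      have r1G: "r1 \<in> Gdd d n" using r1SW SW_refls[OF assms] refls_Gdd by blast
      have r2G: "r2 \<in> Gdd d n" using r2SW SW_refls[OF assms] refls_Gdd by blast
      have r1c: "r1 \<in> carrier_mat n n" using r1SW SW_carrier by blast
      have r2c: "r2 \<in> carrier_mat n n" using r2SW SW_carrier by blast
      have r1r: "r1 * r1 = 1\<^sub>m n" unfolding r1_def using l jn by (intro swapm_invol) auto
      have r2r: "r2 * r2 = 1\<^sub>m n" unfolding r2_def using l jn cj by (intro swapm_invol) auto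
      define g' where "g' = r2 * (r1 * g)"
      have r1gc: "r1 * g \<in> carrier_mat n n" using r1c gc by simp
      have g'G: "g' \<in> Gdd d n" unfolding g'_def by (intro Gdd_mult r2G r1G less.prems)
      have sub: "NF n g' \<subseteq> NF n g - {j}"
      proof
        fix b assume b: "b \<in> NF n g'"
        then have bn: "b < n" by (simp add: NF_def)
        have ag': "act n g' (ev b) = act n r2 (act n r1 (act n g (ev b)))"
          unfolding g'_def using r2c r1gc r1c gc by (simp add: act_mult)
        show "b \<in> NF n g - {j}"
        proof (rule ccontr)
          assume "b \<notin> NF n g - {j}"
          then have "b \<notin> NF n g \<or> b = j" by blast
          then have "act n g' (ev b) = ev b"
          proof
            assume bj: "b = j"
            have "act n g (ev b) = sc (c j) (ev j)" using col bj jn pid by simp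
            moreover have "act n r1 (ev j) = ev l" unfolding r1_def using l jn by (simp add: act_swapm_ev)
            moreover have "act n r2 (ev l) = sc (inverse (c j)) (ev j)"
              unfolding r2_def using l jn by (simp add: act_swapm_ev)
            ultimately show ?thesis using ag' cj bj by (simp add: act_sc sc_sc)
          next
            assume bN: "b \<notin> NF n g"
            have bj: "b \<noteq> j" "b \<noteq> l" using bN j lN by blast+
            have "act n g (ev b) = ev b" using bN bn by (simp add: NF_def)
            moreover have "act n r1 (ev b) = ev b" unfolding r1_def using l jn bn bj by (simp add: act_swapm_ev)
            moreover have "act n r2 (ev b) = ev b" unfolding r2_def using l jn bn bj by (simp add: act_swapm_ev)
            ultimately show ?thesis using ag' by simp
          qed
          then show False using b by (simp add: NF_def)
        qed
      qed
      have "NF n g' \<subset> NF n g" using sub j by blast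
      then have "card (NF n g') < card (NF n g)" by (rule psubset_card_mono[OF fin])
      then obtain rs where rs: "set rs \<subseteq> SW d n" "mprod n rs = g'" using less(1)[OF _ g'G] by blast
      have "r2 * g' = r1 * g" unfolding g'_def by (rule invol_cancel[OF r2c r2r r1gc])
      then have "r1 * (r2 * g') = g" using invol_cancel[OF r1c r1r gc] by simp
      then have "mprod n (r1 # r2 # rs) = g" using rs by simp
      moreover have "set (r1 # r2 # rs) \<subseteq> SW d n" using rs r1SW r2SW by simp
      ultimately show ?thesis by blast
    qed
  qed
qed

lemma factors_Gdd: "d \<ge> 1 \<Longrightarrow> g \<in> Gdd d n \<Longrightarrow> factors d n g"
  unfolding factors_def using generation SW_refls by (meson subset_trans)


locale emb =
  fixes n k :: nat and ks :: "nat list" and z :: "nat \<Rightarrow> complex" and d :: nat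
  assumes len: "length ks = k" and dist: "distinct ks" and sub: "set ks \<subseteq> {..<n}"
    and z0: "\<And>i. i < k \<Longrightarrow> z i \<noteq> 0" and zd: "\<And>i. i < k \<Longrightarrow> z i ^ d = 1" and d1: "d \<ge> 1"
begin

abbreviation K where "K \<equiv> set ks"

definition ix :: "nat \<Rightarrow> nat" where "ix a = (THE i. i < k \<and> ks ! i = a)"

lemma nth_inj: "i < k \<Longrightarrow> j < k \<Longrightarrow> ks ! i = ks ! j \<longleftrightarrow> i = j"
  using dist len by (simp add: nth_eq_iff_index_eq)

lemma nth_K[simp]: "i < k \<Longrightarrow> ks ! i \<in> K" using len by simp
lemma nth_n[simp]: "i < k \<Longrightarrow> ks ! i < n" using len sub nth_mem by blast
lemma K_n: "a \<in> K \<Longrightarrow> a < n" using sub by blast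

lemma ix: "a \<in> K \<Longrightarrow> ix a < k \<and> ks ! (ix a) = a"
proof -
  assume a: "a \<in> K"
  then obtain i where i: "i < k" "ks ! i = a" using len by (metis in_set_conv_nth)
  have "\<exists>!i. i < k \<and> ks ! i = a" using i nth_inj by blast
  then show ?thesis unfolding ix_def by (rule theI')
qed

lemma ix_lt[simp]: "a \<in> K \<Longrightarrow> ix a < k" using ix by blast
lemma nth_ix[simp]: "a \<in> K \<Longrightarrow> ks ! (ix a) = a" using ix by blast
lemma ix_nth[simp]: assumes "i < k" shows "ix (ks ! i) = i"
proof -
  have h: "ix (ks ! i) < k" "ks ! (ix (ks ! i)) = ks ! i" using ix[of "ks ! i"] assms by auto
  show ?thesis using nth_inj[OF h(1) assms] h(2) by simp
qed

lemma bijK: "bij_betw ((!) ks) {..<k} K"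
  by (rule bij_betw_nth) (use dist len in auto)

lemma sumK: "(\<Sum>a<n. if a \<in> K then F a else 0) = (\<Sum>i<k. F (ks ! i))"
proof -
  have "(\<Sum>a<n. if a \<in> K then F a else 0) = sum F ({..<n} \<inter> K)"
    by (simp add: sum.inter_restrict)
  also have "{..<n} \<inter> K = K" using sub by blast
  also have "sum F K = (\<Sum>i<k. F (ks ! i))"
    using sum.reindex_bij_betw[OF bijK, of F] by simp
  finally show ?thesis .
qed

definition psi :: "complex mat \<Rightarrow> complex mat" where
  "psi M = mat n n (\<lambda>(a, b). if a \<in> K \<and> b \<in> K then M $$ (ix a, ix b) * z (ix a) / z (ix b)
                             else if a = b then 1 else 0)"

lemma psi_carrier[simp]: "psi M \<in> carrier_mat n n" by (simp add: psi_def)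
lemma psi_dims[simp]: "dim_row (psi M) = n" "dim_col (psi M) = n" by (simp_all add: psi_def)

lemma psi_index: "a < n \<Longrightarrow> b < n \<Longrightarrow> psi M $$ (a, b) =
   (if a \<in> K \<and> b \<in> K then M $$ (ix a, ix b) * z (ix a) / z (ix b) else if a = b then 1 else 0)"
  by (simp add: psi_def)

lemma psi_mult:
  assumes M: "M \<in> carrier_mat k k" and N: "N \<in> carrier_mat k k"
  shows "psi (M * N) = psi M * psi N"
proof (rule eq_matI)
  fix a b assume "a < dim_row (psi M * psi N)" "b < dim_col (psi M * psi N)"
  then have ab: "a < n" "b < n" by auto
  have rhs: "(psi M * psi N) $$ (a, b) = (\<Sum>c<n. psi M $$ (a, c) * psi N $$ (c, b))"
    by (rule mat_mult_entry[OF psi_carrier psi_carrier ab])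
  show "psi (M * N) $$ (a, b) = (psi M * psi N) $$ (a, b)"
  proof (cases "a \<in> K")
    case aK: True
    have "(\<Sum>c<n. psi M $$ (a, c) * psi N $$ (c, b))
        = (\<Sum>c<n. if c \<in> K then M $$ (ix a, ix c) * z (ix a) / z (ix c) * psi N $$ (c, b) else 0)"
      by (rule sum.cong) (use aK ab in \<open>auto simp: psi_index\<close>)
    also have "\<dots> = (\<Sum>i<k. M $$ (ix a, ix (ks ! i)) * z (ix a) / z (ix (ks ! i)) * psi N $$ (ks ! i, b))"
      by (rule sumK)
    also have "\<dots> = (\<Sum>i<k. M $$ (ix a, i) * z (ix a) / z i * psi N $$ (ks ! i, b))"
      by (rule sum.cong) simp_all
    finally have e: "(psi M * psi N) $$ (a, b) = (\<Sum>i<k. M $$ (ix a, i) * z (ix a) / z i * psi N $$ (ks ! i, b))"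
      using rhs by simp
    show ?thesis
    proof (cases "b \<in> K")
      case bK: True
      have "(\<Sum>i<k. M $$ (ix a, i) * z (ix a) / z i * psi N $$ (ks ! i, b))
          = (\<Sum>i<k. M $$ (ix a, i) * N $$ (i, ix b)) * z (ix a) / z (ix b)"
        unfolding sum_distrib_right sum_divide_distrib
        by (rule sum.cong) (use bK z0 ab in \<open>auto simp: psi_index field_simps\<close>)
      also have "\<dots> = (M * N) $$ (ix a, ix b) * z (ix a) / z (ix b)"
        using mat_mult_entry[OF M N, of "ix a" "ix b"] aK bK by simp
      finally show ?thesis using e aK bK ab by (simp add: psi_index)
    next
      case bK: False
      have "(\<Sum>i<k. M $$ (ix a, i) * z (ix a) / z i * psi N $$ (ks ! i, b)) = 0"
        by (rule sum.neutral) (use bK ab in \<open>auto simp: psi_index\<close>)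
      then show ?thesis using e aK bK ab by (auto simp: psi_index)
    qed
  next
    case aK: False
    have "(\<Sum>c<n. psi M $$ (a, c) * psi N $$ (c, b)) = (\<Sum>c<n. if c = a then psi N $$ (c, b) else 0)"
      by (rule sum.cong) (use aK ab in \<open>auto simp: psi_index\<close>)
    also have "\<dots> = psi N $$ (a, b)" using ab by simp
    finally show ?thesis using rhs aK ab by (simp add: psi_index)
  qed
qed auto

lemma psi_one: "psi (1\<^sub>m k) = 1\<^sub>m n"
proof (rule eq_matI)
  fix a b assume "a < dim_row (1\<^sub>m n)" "b < dim_col (1\<^sub>m n)"
  then have ab: "a < n" "b < n" by auto
  show "psi (1\<^sub>m k) $$ (a, b) = 1\<^sub>m n $$ (a, b)"
  proof (cases "a \<in> K \<and> b \<in> K")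
    case True
    then have "ix a = ix b \<longleftrightarrow> a = b" by (metis nth_ix)
    then show ?thesis using True ab z0[of "ix b"] by (auto simp: psi_index)
  next
    case False
    then show ?thesis using ab by (auto simp: psi_index)
  qed
qed auto

lemma psi_inj:
  assumes "M \<in> carrier_mat k k" "N \<in> carrier_mat k k" "psi M = psi N"
  shows "M = N"
proof (rule eq_matI)
  fix i j assume "i < dim_row N" "j < dim_col N"
  then have ij: "i < k" "j < k" using assms by auto
  have "psi M $$ (ks ! i, ks ! j) = psi N $$ (ks ! i, ks ! j)" using assms by simp
  then have "M $$ (i, j) * z i / z j = N $$ (i, j) * z i / z j" using ij by (simp add: psi_index)
  then show "M $$ (i, j) = N $$ (i, j)" using z0 ij by (simp add: field_simps)
qed (use assms in auto)

lemma act_psi: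
  "act n (psi M) f a = (if a \<in> K then z (ix a) * (\<Sum>j<k. M $$ (ix a, j) * (f (ks ! j) / z j))
                         else if a < n then f a else 0)"
proof (cases "a \<in> K")
  case aK: True
  then have an: "a < n" by (rule K_n)
  have "act n (psi M) f a = (\<Sum>c<n. psi M $$ (a, c) * f c)" using an by (simp add: act_def)
  also have "\<dots> = (\<Sum>c<n. if c \<in> K then z (ix a) * (M $$ (ix a, ix c) * (f c / z (ix c))) else 0)"
    by (rule sum.cong) (use aK an in \<open>auto simp: psi_index\<close>)
  also have "\<dots> = (\<Sum>i<k. z (ix a) * (M $$ (ix a, ix (ks ! i)) * (f (ks ! i) / z (ix (ks ! i)))))"
    by (rule sumK)
  also have "\<dots> = (\<Sum>i<k. z (ix a) * (M $$ (ix a, i) * (f (ks ! i) / z i)))"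
    by (rule sum.cong) simp_all
  finally show ?thesis using aK by (simp add: sum_distrib_left)
next
  case aK: False
  show ?thesis
  proof (cases "a < n")
    case True
    have "act n (psi M) f a = (\<Sum>c<n. psi M $$ (a, c) * f c)" using True by (simp add: act_def)
    also have "\<dots> = (\<Sum>c<n. if c = a then f c else 0)"
      by (rule sum.cong) (use aK True in \<open>auto simp: psi_index\<close>)
    finally show ?thesis using True aK by simp
  qed (use aK in \<open>simp add: act_def\<close>)
qed

lemma psi_swapm:
  assumes "i < k" "j < k" "i \<noteq> j"
  shows "psi (swapm k i j 1) = swapm n (ks ! i) (ks ! j) (z j / z i)"
proof (rule eq_matI)
  fix a b assume "a < dim_row (swapm n (ks ! i) (ks ! j) (z j / z i))"
    "b < dim_col (swapm n (ks ! i) (ks ! j) (z j / z i))"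
  then have ab: "a < n" "b < n" by (auto simp: swapm_def)
  have pq: "ks ! i \<noteq> ks ! j" using assms nth_inj by blast
  have zi: "z i \<noteq> 0" "z j \<noteq> 0" using z0 assms by auto
  show "psi (swapm k i j 1) $$ (a, b) = swapm n (ks ! i) (ks ! j) (z j / z i) $$ (a, b)"
  proof (cases "a \<in> K \<and> b \<in> K")
    case True
    then have ia: "ix a < k" "ix b < k" by auto
    have l: "psi (swapm k i j 1) $$ (a, b) =
      (if ix a = tr i j (ix b) then swc i j 1 (ix b) else 0) * z (ix a) / z (ix b)"
      using True ab ia by (simp add: psi_index swapm_def monm_index)
    have r: "swapm n (ks ! i) (ks ! j) (z j / z i) $$ (a, b) =
      (if a = tr (ks ! i) (ks ! j) b then swc (ks ! i) (ks ! j) (z j / z i) b else 0)"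
      using ab by (simp add: swapm_def monm_index)
    have ea: "a = ks ! (ix a)" "b = ks ! (ix b)" using True by auto
    consider "ix b = i" | "ix b = j" | "ix b \<noteq> i \<and> ix b \<noteq> j" by blast
    then show ?thesis
    proof cases
      case 1
      then have "b = ks ! i" using ea by simp
      moreover have "a = ks ! j \<longleftrightarrow> ix a = j" using ea assms ia nth_inj by metis
      ultimately show ?thesis using l r 1 pq assms zi by (auto simp: swc_def)
    next
      case 2
      then have "b = ks ! j" using ea by simp
      moreover have "a = ks ! i \<longleftrightarrow> ix a = i" using ea assms ia nth_inj by metis
      ultimately show ?thesis using l r 2 pq assms zi by (auto simp: swc_def field_simps)
    next
      case 3
      then have "b \<noteq> ks ! i" "b \<noteq> ks ! j" using ea assms by auto
      moreover have "a = b \<longleftrightarrow> ix a = ix b" using ea by metis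
      moreover have "z (ix b) \<noteq> 0" using z0 ia by blast
      ultimately show ?thesis using l r 3 pq assms zi by (auto simp: swc_def tr_def)
    qed
  next
    case False
    have r: "swapm n (ks ! i) (ks ! j) (z j / z i) $$ (a, b) =
      (if a = tr (ks ! i) (ks ! j) b then swc (ks ! i) (ks ! j) (z j / z i) b else 0)"
      using ab by (simp add: swapm_def monm_index)
    have "tr (ks ! i) (ks ! j) b \<in> K \<longleftrightarrow> b \<in> K" using assms by (auto simp: tr_def)
    then show ?thesis using False ab r assms by (auto simp: psi_index tr_def swc_def)
  qed
qed (auto simp: swapm_def)

end


lemma mprod_Gdd: "set rs \<subseteq> Gdd d n \<Longrightarrow> mprod n rs \<in> Gdd d n"
  by (induction rs) (auto simp: Gdd_one intro: Gdd_mult)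

lemma act_monm_at:
  assumes "bij_betw \<pi> {..<n} {..<n}" "b < n"
  shows "act n (monm n \<pi> c) F (\<pi> b) = c b * F b"
proof -
  have pb: "\<pi> b < n" using bij_lt assms by blast
  have inj: "l < n \<Longrightarrow> \<pi> b = \<pi> l \<longleftrightarrow> l = b" for l
    using assms by (auto simp: bij_betw_def inj_on_def)
  have "act n (monm n \<pi> c) F (\<pi> b) = (\<Sum>l<n. (if \<pi> b = \<pi> l then c l else 0) * F l)"
    using pb by (simp add: act_def monm_index)
  also have "\<dots> = (\<Sum>l<n. if l = b then c l * F l else 0)"
    by (rule sum.cong) (use inj in auto)
  finally show ?thesis using assms by simp
qed

lemma act_swapm:
  assumes "p < n" "q < n" "p \<noteq> q"
  shows "act n (swapm n p q c) F a = (if a = q then c * F p else if a = p then inverse c * F q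
                                     else if a < n then F a else 0)"
proof -
  have b: "bij_betw (tr p q) {..<n} {..<n}" using tr_bij assms by blast
  consider "a = q" | "a = p" | "a \<noteq> p \<and> a \<noteq> q \<and> a < n" | "a \<ge> n" by linarith
  then show ?thesis
  proof cases
    case 1
    then show ?thesis using act_monm_at[OF b assms(1), of "swc p q c" F] assms by (simp add: swapm_def)
  next
    case 2
    then show ?thesis using act_monm_at[OF b assms(2), of "swc p q c" F] assms by (simp add: swapm_def)
  next
    case 3
    then have "tr p q a = a" by simp
    then show ?thesis using act_monm_at[OF b, of a "swc p q c" F] 3 by (simp add: swapm_def)
  next
    case 4
    then show ?thesis using assms by (simp add: act_def)
  qed
qed

context emb begin

lemma psi_mprod: "set rs \<subseteq> carrier_mat k k \<Longrightarrow> psi (mprod k rs) = mprod n (map psi rs)"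
proof (induction rs)
  case Nil then show ?case by (simp add: psi_one)
next
  case (Cons r rs)
  then show ?case by (simp add: psi_mult mprod_carrier)
qed

lemma zz: "i < k \<Longrightarrow> j < k \<Longrightarrow> (z j / z i) ^ d = 1"
  using zd by (simp add: power_divide)

lemma psi_SW: "r \<in> SW 1 k \<Longrightarrow> psi r \<in> SW d n"
proof -
  assume "r \<in> SW 1 k"
  then obtain i j c where r: "r = swapm k i j c" "i < k" "j < k" "i \<noteq> j" "c ^ 1 = 1"
    unfolding SW_def by blast
  have "psi r = swapm n (ks ! i) (ks ! j) (z j / z i)" using r psi_swapm by simp
  moreover have "ks ! i \<noteq> ks ! j" using r nth_inj by blast
  moreover have "(z j / z i) ^ d = 1" using zz r by blast
  moreover have "ks ! i < n" "ks ! j < n" using r by auto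
  ultimately show ?thesis unfolding SW_def by blast
qed

lemma psi_Gdd:
  assumes "M \<in> Gdd 1 k"
  shows "psi M \<in> Gdd d n" "factors d n (psi M)"
proof -
  obtain rs where rs: "set rs \<subseteq> SW 1 k" "mprod k rs = M"
    using generation[of 1 M k] assms by auto
  have c: "set rs \<subseteq> carrier_mat k k" using rs SW_carrier by blast
  have e: "psi M = mprod n (map psi rs)" using psi_mprod[OF c] rs by simp
  have "set (map psi rs) \<subseteq> SW d n" using rs psi_SW by auto
  then have r: "set (map psi rs) \<subseteq> refls d n" using SW_refls[OF d1] by blast
  then show "psi M \<in> Gdd d n" unfolding e using refls_Gdd by (metis mprod_Gdd subset_trans)
  show "factors d n (psi M)" unfolding factors_def e using r by blast
qed

lemma vec_act: "M \<in> carrier_mat n n \<Longrightarrow> v \<in> carrier_vec n \<Longrightarrow> l < n \<Longrightarrow>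
    (M *\<^sub>v v) $ l = act n M (\<lambda>i. if i < n then v $ i else 0) l"
  by (simp add: act_def scalar_prod_def atLeast0LessThan)

lemma psi_refl:
  assumes R: "R \<in> refls 1 k"
  shows "psi R \<in> refls d n"
proof -
  have RG: "R \<in> Gdd 1 k" and R1: "R \<noteq> 1\<^sub>m k" using R by (auto simp: refls_def)
  have Rc: "R \<in> carrier_mat k k" using RG Gdd_carrier by blast
  obtain a where a: "a \<in> carrier_vec k" "a \<noteq> 0\<^sub>v k"
    and fx: "\<forall>v\<in>carrier_vec k. a \<bullet> v = 0 \<longrightarrow> R *\<^sub>v v = v"
    using R by (auto simp: refls_def)
  obtain p where p: "p < k" "a $ p \<noteq> 0" using a by (metis eq_vecI index_zero_vec(1,2) carrier_vecD)
  have G: "psi R \<in> Gdd d n" using psi_Gdd[OF RG] by blast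
  have ne: "psi R \<noteq> 1\<^sub>m n"
  proof
    assume "psi R = 1\<^sub>m n"
    then have "psi R = psi (1\<^sub>m k)" by (simp add: psi_one)
    then have "R = 1\<^sub>m k" using psi_inj[OF Rc] by simp
    then show False using R1 by simp
  qed
  define b where "b = vec n (\<lambda>l. if l \<in> K then a $ (ix l) / z (ix l) else 0)"
  have bc: "b \<in> carrier_vec n" by (simp add: b_def)
  have b0: "b \<noteq> 0\<^sub>v n"
  proof
    assume "b = 0\<^sub>v n"
    then have "b $ (ks ! p) = 0\<^sub>v n $ (ks ! p)" by simp
    then show False using p z0[of p] by (simp add: b_def)
  qed
  have fxn: "psi R *\<^sub>v v = v" if v: "v \<in> carrier_vec n" "b \<bullet> v = 0" for v
  proof -
    define f where "f = (\<lambda>i. if i < n then v $ i else (0::complex))"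
    define y where "y = (\<lambda>i. if i < k then f (ks ! i) / z i else 0)"
    have yV: "y \<in> Vn k" by (simp add: y_def Vn_def)
    have "(\<Sum>i<k. a $ i * y i) = (\<Sum>i<k. a $ (ix (ks ! i)) / z (ix (ks ! i)) * v $ (ks ! i))"
      by (rule sum.cong) (auto simp: y_def f_def)
    also have "\<dots> = (\<Sum>l<n. if l \<in> K then a $ (ix l) / z (ix l) * v $ l else 0)"
      by (rule sumK[symmetric])
    also have "\<dots> = (\<Sum>l<n. b $ l * v $ l)" by (rule sum.cong) (auto simp: b_def)
    also have "\<dots> = b \<bullet> v" using v by (simp add: scalar_prod_def atLeast0LessThan)
    finally have "(\<Sum>i<k. a $ i * y i) = 0" using v by simp
    then have Ry: "act k R y = y" using refl_fix[OF Rc a(1) fx yV] by simp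
    have "act n (psi R) f = f"
    proof
      fix l show "act n (psi R) f l = f l"
      proof (cases "l \<in> K")
        case True
        have "(\<Sum>j<k. R $$ (ix l, j) * (f (ks ! j) / z j)) = act k R y (ix l)"
          using True by (simp add: act_def y_def)
        also have "\<dots> = y (ix l)" using Ry by simp
        finally show ?thesis using True z0[of "ix l"] by (simp add: act_psi y_def)
      next
        case False
        then show ?thesis by (simp add: act_psi f_def)
      qed
    qed
    show ?thesis
    proof (rule eq_vecI)
      fix l assume "l < dim_vec v"
      then have l: "l < n" using v by simp
      have "(psi R *\<^sub>v v) $ l = act n (psi R) f l" using vec_act[OF psi_carrier v(1) l] by (simp add: f_def)
      then show "(psi R *\<^sub>v v) $ l = v $ l" using \<open>act n (psi R) f = f\<close> l by (simp add: f_def)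
    qed (use v in simp)
  qed
  show ?thesis unfolding refls_def using G ne bc b0 fxn by blast
qed

lemma absl_psi_le:
  assumes "M \<in> Gdd 1 k"
  shows "absl d n (psi M) \<le> absl 1 k M"
proof -
  have fM: "factors 1 k M" using factors_Gdd[of 1 M k] assms by simp
  obtain rs where rs: "set rs \<subseteq> refls 1 k" "mprod k rs = M" "length rs = absl 1 k M"
    by (rule absl_ex[OF fM])
  have c: "set rs \<subseteq> carrier_mat k k" using rs refls_Gdd Gdd_carrier by blast
  have "psi M = mprod n (map psi rs)" using psi_mprod[OF c] rs by simp
  moreover have "set (map psi rs) \<subseteq> refls d n" using rs psi_refl by auto
  ultimately show ?thesis using absl_le[of "map psi rs" d n] rs by simp
qed

end


context emb begin

lemma act_psi_h:
  assumes M: "M \<in> carrier_mat k k" and i: "i < k"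
  shows "act n (psi M) (sc (z i) (ev (ks ! i))) a = (if a \<in> K then z (ix a) * M $$ (ix a, i) else 0)"
proof (cases "a \<in> K")
  case True
  have "(\<Sum>j<k. M $$ (ix a, j) * (sc (z i) (ev (ks ! i)) (ks ! j) / z j))
      = (\<Sum>j<k. if j = i then M $$ (ix a, j) else 0)"
    by (rule sum.cong) (use i z0 nth_inj in \<open>auto simp: sc_def ev_def\<close>)
  also have "\<dots> = M $$ (ix a, i)" using i by simp
  finally show ?thesis using True by (simp add: act_psi)
next
  case False
  then have "a \<noteq> ks ! i" using i by auto
  then show ?thesis using False by (simp add: act_psi sc_def ev_def)
qed

lemma absl_le_rho:
  "M \<in> Gdd 1 k \<Longrightarrow> absl 1 k M \<le> rho n (psi M)"
proof (induction "rho n (psi M)" arbitrary: M rule: less_induct)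
  case less
  show ?case
  proof (cases "M = 1\<^sub>m k")
    case True then show ?thesis by (simp add: absl_one)
  next
    case False
    obtain \<sigma> e where M: "bij_betw \<sigma> {..<k} {..<k}" "M = monm k \<sigma> e"
      "\<forall>j<k. e j \<noteq> 0 \<and> e j ^ 1 = 1"
      by (rule Gdd_mono[OF less.prems]) blast
    have e1: "j < k \<Longrightarrow> e j = 1" for j using M(3) by simp
    have Mc: "M \<in> carrier_mat k k" using M(2) by simp
    have "\<exists>i<k. \<sigma> i \<noteq> i"
    proof (rule ccontr)
      assume "\<not> (\<exists>i<k. \<sigma> i \<noteq> i)"
      then have "M = monm k id (\<lambda>_. 1)" unfolding M(2) by (intro monm_cong) (auto simp: e1)
      then show False using False by (simp add: one_mono)
    qed
    then obtain i where i: "i < k" "\<sigma> i \<noteq> i" by blast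
    define j where "j = \<sigma> i"
    have j: "j < k" "i \<noteq> j" using i bij_lt[OF M(1)] by (auto simp: j_def)
    have sinj: "l < k \<Longrightarrow> \<sigma> l = j \<longleftrightarrow> l = i" for l
      using M(1) i by (auto simp: bij_betw_def inj_on_def j_def)
    define \<tau> where "\<tau> = swapm k i j 1"
    have "(1::complex) ^ 1 = 1" by simp
    then have \<tau>SW: "\<tau> \<in> SW 1 k" unfolding \<tau>_def SW_def using i j by blast
    have \<tau>R: "\<tau> \<in> refls 1 k" using \<tau>SW SW_refls[of 1 k] by auto
    have \<tau>G: "\<tau> \<in> Gdd 1 k" using \<tau>R refls_Gdd by blast
    have \<tau>c: "\<tau> \<in> carrier_mat k k" using \<tau>SW SW_carrier by blast
    have \<tau>\<tau>: "\<tau> * \<tau> = 1\<^sub>m k" unfolding \<tau>_def using i j by (intro swapm_invol) auto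
    define M' where "M' = \<tau> * M"
    have M'G: "M' \<in> Gdd 1 k" unfolding M'_def by (rule Gdd_mult[OF \<tau>G less.prems])
    have M'c: "M' \<in> carrier_mat k k" using M'G Gdd_carrier by blast
    have MM': "M = \<tau> * M'" unfolding M'_def using invol_cancel[OF \<tau>c \<tau>\<tau> Mc] by simp
    have M'e: "M' = monm k (tr i j \<circ> \<sigma>) (\<lambda>l. swc i j 1 (\<sigma> l) * e l)"
      unfolding M'_def \<tau>_def swapm_def M(2) by (rule monm_mult) (use bij_lt[OF M(1)] in blast)
    define g where "g = psi M"
    define g' where "g' = psi M'"
    define t where "t = psi \<tau>"
    have gg': "g' = t * g" unfolding g'_def t_def g_def M'_def by (rule psi_mult[OF \<tau>c Mc])
    define p where "p = ks ! i"
    define q where "q = ks ! j"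
    have pq: "p < n" "q < n" "p \<noteq> q" "p \<in> K" "q \<in> K" using i j nth_inj by (auto simp: p_def q_def)
    have zi: "z i \<noteq> 0" "z j \<noteq> 0" using z0 i j by auto
    have tdef: "t = swapm n p q (z j / z i)" unfolding t_def \<tau>_def p_def q_def
      by (rule psi_swapm) (use i j in auto)
    define h where "h = sc (z i) (ev p)"
    have hV: "h \<in> Vn n" using pq by (simp add: h_def)
    have acth: "act n g h = sc (z j) (ev q)"
    proof
      fix a
      have "act n g h a = (if a \<in> K then z (ix a) * M $$ (ix a, i) else 0)"
        unfolding g_def h_def p_def by (rule act_psi_h[OF Mc i(1)])
      also have "\<dots> = sc (z j) (ev q) a"
      proof (cases "a \<in> K")
        case True
        have "M $$ (ix a, i) = (if ix a = j then 1 else 0)"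
          using True i e1 by (simp add: M(2) monm_index j_def)
        moreover have "ix a = j \<longleftrightarrow> a = q" using True j by (auto simp: q_def)
        ultimately show ?thesis using True by (auto simp: sc_def ev_def q_def)
      next
        case False
        then show ?thesis using pq by (auto simp: sc_def ev_def)
      qed
      finally show "act n g h a = sc (z j) (ev q) a" .
    qed
    define y0 where "y0 = act n g h - h"
    have y0R: "y0 \<in> Rg n g" unfolding y0_def Rg_def using hV by blast
    have y0p: "y0 p = - z i" unfolding y0_def using pq by (simp add: acth, simp add: h_def sc_def ev_def)
    have sub: "Rg n g' \<subseteq> Rg n g"
    proof
      fix x assume "x \<in> Rg n g'"
      then obtain f where f: "x = act n g' f - f" "f \<in> Vn n" by (auto simp: Rg_def)
      define F where "F = act n g f"
      have FV: "F \<in> Vn n" by (simp add: F_def)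
      have "act n g' f = act n t F" unfolding gg' F_def by (rule act_mult) (auto simp: t_def g_def)
      then have x: "x = (act n t F - F) + (F - f)" using f by simp
      define s where "s = F p / z i - F q / z j"
      have "act n t F - F = sc s y0"
      proof
        fix a
        have tF: "act n t F a = (if a = q then z j / z i * F p else if a = p then inverse (z j / z i) * F q
                     else if a < n then F a else 0)"
          unfolding tdef by (rule act_swapm[OF pq(1-3)])
        have y0a: "y0 a = (if a = q then z j else 0) - (if a = p then z i else 0)"
          unfolding y0_def by (simp add: acth, simp add: h_def sc_def ev_def)
        have "(act n t F - F) a = act n t F a - F a" by simp
        also have "\<dots> = s * y0 a" unfolding tF y0a using pq zi FV
          by (cases "a = q"; cases "a = p") (auto simp: s_def field_simps Vn_def)
        finally show "(act n t F - F) a = sc s y0 a" by (simp add: sc_def)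
      qed
      moreover have "sc s y0 \<in> Rg n g" using y0R Rg_subspace FV.subspace_scale by blast
      moreover have "F - f \<in> Rg n g" using f unfolding Rg_def F_def by blast
      ultimately show "x \<in> Rg n g" using x Rg_subspace FV.subspace_add by metis
    qed
    have notin: "y0 \<notin> Rg n g'"
    proof
      assume "y0 \<in> Rg n g'"
      then obtain f where f: "y0 = act n g' f - f" "f \<in> Vn n" by (auto simp: Rg_def)
      have "M' $$ (i, l) = (if l = i then 1 else 0)" if l: "l < k" for l
      proof -
        have "tr i j (\<sigma> l) = i \<longleftrightarrow> \<sigma> l = j" by (auto simp: tr_def)
        then show ?thesis using l i j sinj e1 bij_lt[OF M(1) l] by (auto simp: M'e monm_index swc_def)
      qed
      then have "(\<Sum>l<k. M' $$ (i, l) * (f (ks ! l) / z l)) = (\<Sum>l<k. if l = i then f (ks ! l) / z l else 0)"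
        by (intro sum.cong) auto
      also have "\<dots> = f p / z i" using i by (simp add: p_def)
      finally have "act n g' f p = f p" using pq zi i by (simp add: g'_def act_psi p_def)
      then have "y0 p = 0" using f by simp
      then show False using y0p zi by simp
    qed
    have "rho n g' < rho n g" unfolding rho_def
      by (rule dim_strict[OF Rg_Vn sub Rg_subspace y0R notin])
    then have IH: "absl 1 k M' \<le> rho n g'" using less(1)[OF _ M'G] by (simp add: g'_def g_def)
    have fM': "factors 1 k M'" using factors_Gdd[of 1 M' k] M'G by simp
    obtain rs where rs: "set rs \<subseteq> refls 1 k" "mprod k rs = M'" "length rs = absl 1 k M'"
      by (rule absl_ex[OF fM'])
    have "absl 1 k M \<le> length (\<tau> # rs)"
      using absl_le[of "\<tau> # rs" 1 k] rs \<tau>R MM' by simp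
    then have "absl 1 k M \<le> 1 + absl 1 k M'" using rs by simp
    then show ?thesis using IH \<open>rho n g' < rho n g\<close> by (simp add: g_def)
  qed
qed

lemma claim1:
  assumes "M \<in> Gdd 1 k"
  shows "absl d n (psi M) = absl 1 k M" "rho n (psi M) = absl 1 k M"
proof -
  have a: "rho n (psi M) \<le> absl d n (psi M)" using rho_le_absl psi_Gdd[OF assms] by blast
  have b: "absl d n (psi M) \<le> absl 1 k M" by (rule absl_psi_le[OF assms])
  have c: "absl 1 k M \<le> rho n (psi M)" by (rule absl_le_rho[OF assms])
  show "absl d n (psi M) = absl 1 k M" "rho n (psi M) = absl 1 k M" using a b c by auto
qed

end


lemma Rg_neg: "y \<in> Rg n M \<Longrightarrow> - y \<in> Rg n M"
  using Rg_subspace FV.subspace_neg by blast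

lemma rowsum:
  assumes "M \<in> Gdd 1 k" "a < k"
  shows "(\<Sum>j<k. M $$ (a, j)) = 1"
proof -
  obtain \<sigma> e where M: "bij_betw \<sigma> {..<k} {..<k}" "M = monm k \<sigma> e"
    "\<forall>j<k. e j \<noteq> 0 \<and> e j ^ 1 = 1"
    by (rule Gdd_mono[OF assms(1)]) blast
  define j0 where "j0 = inv_into {..<k} \<sigma> a"
  have aim: "a \<in> \<sigma> ` {..<k}" using M(1) assms(2) by (auto simp: bij_betw_def)
  have j0: "j0 < k" "\<sigma> j0 = a" using inv_into_into[OF aim] f_inv_into_f[OF aim]
    by (auto simp: j0_def)
  have eq: "j < k \<Longrightarrow> a = \<sigma> j \<longleftrightarrow> j = j0" for j
    using M(1) j0 by (auto simp: bij_betw_def inj_on_def)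
  have "(\<Sum>j<k. M $$ (a, j)) = (\<Sum>j<k. if j = j0 then 1 else 0)"
    by (rule sum.cong) (use assms(2) M(3) eq in \<open>auto simp: M(2) monm_index\<close>)
  also have "\<dots> = 1" using j0 by simp
  finally show ?thesis .
qed

context emb begin

definition v0 :: "nat \<Rightarrow> complex" where "v0 a = (if a \<in> K then z (ix a) else 0)"

lemma v0_Vn: "v0 \<in> Vn n" by (auto simp: v0_def Vn_def dest: K_n)

lemma psi_fix_ev: "l < n \<Longrightarrow> l \<notin> K \<Longrightarrow> act n (psi N) (ev l) = ev l"
proof
  fix a assume l: "l < n" "l \<notin> K"
  show "act n (psi N) (ev l) a = ev l a"
  proof (cases "a \<in> K")
    case True
    have "(\<Sum>j<k. N $$ (ix a, j) * (ev l (ks ! j) / z j)) = 0"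
      by (rule sum.neutral) (use l in \<open>auto simp: ev_def\<close>)
    then show ?thesis using True l by (auto simp: act_psi ev_def)
  next
    case False
    then show ?thesis using l by (auto simp: act_psi ev_def)
  qed
qed

lemma psi_fix_v0: "N \<in> Gdd 1 k \<Longrightarrow> act n (psi N) v0 = v0"
proof
  fix a assume N: "N \<in> Gdd 1 k"
  show "act n (psi N) v0 a = v0 a"
  proof (cases "a \<in> K")
    case True
    have "(\<Sum>j<k. N $$ (ix a, j) * (v0 (ks ! j) / z j)) = (\<Sum>j<k. N $$ (ix a, j))"
      by (rule sum.cong) (use z0 in \<open>auto simp: v0_def\<close>)
    also have "\<dots> = 1" using rowsum[OF N] True by simp
    finally show ?thesis using True by (simp add: act_psi v0_def)
  next
    case False
    then show ?thesis by (auto simp: act_psi v0_def)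
  qed
qed

lemma fix_in_image:
  assumes uG: "u \<in> Gdd d n"
    and fe: "\<And>l. l < n \<Longrightarrow> l \<notin> K \<Longrightarrow> act n u (ev l) = ev l"
    and fv: "act n u v0 = v0"
  shows "\<exists>M\<in>Gdd 1 k. u = psi M"
proof -
  obtain \<pi> c where u: "bij_betw \<pi> {..<n} {..<n}" "u = monm n \<pi> c"
    "\<forall>j<n. c j \<noteq> 0 \<and> c j ^ d = 1"
    by (rule Gdd_mono[OF uG]) blast
  have pl: "b < n \<Longrightarrow> \<pi> b < n" for b using bij_lt[OF u(1)] .
  have inj: "a < n \<Longrightarrow> b < n \<Longrightarrow> \<pi> a = \<pi> b \<Longrightarrow> a = b" for a b
    using u(1) by (auto simp: bij_betw_def inj_on_def)
  have outK: "l < n \<Longrightarrow> l \<notin> K \<Longrightarrow> \<pi> l = l \<and> c l = 1" for l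
  proof -
    assume l: "l < n" "l \<notin> K"
    have "sc (c l) (ev (\<pi> l)) = ev l" using fe[OF l] act_monm_ev[of l n \<pi> c] pl[OF l(1)] l u(2) by simp
    then show ?thesis using sc_ev_eq by blast
  qed
  have inK: "b \<in> K \<Longrightarrow> \<pi> b \<in> K" for b
  proof (rule ccontr)
    assume b: "b \<in> K" "\<pi> b \<notin> K"
    have bn: "b < n" using b K_n by blast
    have "\<pi> (\<pi> b) = \<pi> b" using outK[OF pl[OF bn] b(2)] by blast
    then have "\<pi> b = b" using inj[OF pl[OF bn] bn] by blast
    then show False using b by simp
  qed
  define \<sigma> where "\<sigma> i = ix (\<pi> (ks ! i))" for i
  have \<sigma>lt: "i < k \<Longrightarrow> \<sigma> i < k" for i using inK by (simp add: \<sigma>_def)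
  have \<sigma>nth: "i < k \<Longrightarrow> ks ! (\<sigma> i) = \<pi> (ks ! i)" for i using inK by (simp add: \<sigma>_def)
  have \<sigma>inj: "inj_on \<sigma> {..<k}"
  proof (rule inj_onI)
    fix i j assume ij: "i \<in> {..<k}" "j \<in> {..<k}" "\<sigma> i = \<sigma> j"
    then have "\<pi> (ks ! i) = \<pi> (ks ! j)" using \<sigma>nth by (metis lessThan_iff)
    then have "ks ! i = ks ! j" using inj ij by auto
    then show "i = j" using nth_inj ij by auto
  qed
  have \<sigma>bij: "bij_betw \<sigma> {..<k} {..<k}"
    unfolding bij_betw_def using \<sigma>inj \<sigma>lt endo_inj_surj[of "{..<k}" \<sigma>] by auto
  have cfix: "i < k \<Longrightarrow> c (ks ! i) * z i = z (\<sigma> i)" for i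
  proof -
    assume i: "i < k"
    have "act n u v0 (\<pi> (ks ! i)) = c (ks ! i) * v0 (ks ! i)"
      unfolding u(2) by (rule act_monm_at[OF u(1)]) (use i in simp)
    then have "v0 (\<pi> (ks ! i)) = c (ks ! i) * z i" using fv i by (simp add: v0_def)
    moreover have "v0 (\<pi> (ks ! i)) = z (\<sigma> i)" using inK i by (simp add: v0_def \<sigma>_def)
    ultimately show ?thesis by simp
  qed
  define M where "M = mat k k (\<lambda>(i, j). u $$ (ks ! i, ks ! j) * z j / z i)"
  have Mm: "M = monm k \<sigma> (\<lambda>_. 1)"
  proof (rule eq_matI)
    fix i j assume "i < dim_row (monm k \<sigma> (\<lambda>_. 1))" "j < dim_col (monm k \<sigma> (\<lambda>_. 1))"
    then have ij: "i < k" "j < k" by auto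
    have e: "ks ! i = \<pi> (ks ! j) \<longleftrightarrow> i = \<sigma> j"
      using \<sigma>nth[OF ij(2)] nth_inj[OF ij(1) \<sigma>lt[OF ij(2)]] by auto
    have "M $$ (i, j) = (if ks ! i = \<pi> (ks ! j) then c (ks ! j) else 0) * z j / z i"
      using ij by (simp add: M_def u(2) monm_index)
    also have "\<dots> = (if i = \<sigma> j then 1 else 0)"
      using e cfix[OF ij(2)] z0 ij \<sigma>lt by auto
    finally show "M $$ (i, j) = monm k \<sigma> (\<lambda>_. 1) $$ (i, j)" using ij by (simp add: monm_index)
  qed (auto simp: M_def)
  have MG: "M \<in> Gdd 1 k" unfolding Mm by (rule monm_Gdd) (use \<sigma>bij in auto)
  have "psi M = u"
  proof (rule eq_matI)
    fix a b assume "a < dim_row u" "b < dim_col u"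
    then have ab: "a < n" "b < n" using u(2) by auto
    show "psi M $$ (a, b) = u $$ (a, b)"
    proof (cases "a \<in> K \<and> b \<in> K")
      case True
      then show ?thesis using ab z0 by (simp add: psi_index M_def)
    next
      case False
      show ?thesis
      proof (cases "b \<in> K")
        case True
        then have "a \<notin> K" using False by blast
        moreover have "\<pi> b \<in> K" using inK True by blast
        ultimately have "a \<noteq> \<pi> b" by blast
        then show ?thesis using ab True \<open>a \<notin> K\<close> by (auto simp: psi_index u(2) monm_index)
      next
        case bK: False
        then have "\<pi> b = b \<and> c b = 1" using outK ab by blast
        then show ?thesis using ab bK by (auto simp: psi_index u(2) monm_index)
      qed
    qed
  qed (use u(2) in auto)
  then show ?thesis using MG by blast
qed

lemma claim3:
  assumes NG: "N \<in> Gdd 1 k" and uG: "u \<in> Gdd d n" and xG: "x \<in> Gdd d n"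
    and ux: "u * x = psi N" and len: "absl d n (psi N) = absl d n u + absl d n x"
  shows "\<exists>M\<in>Gdd 1 k. u = psi M" "\<exists>X\<in>Gdd 1 k. x = psi X"
proof -
  have uc: "u \<in> carrier_mat n n" and xc: "x \<in> carrier_mat n n" using uG xG Gdd_carrier by auto
  have ru: "rho n u \<le> absl d n u" using rho_le_absl factors_Gdd[OF d1 uG] by blast
  have rx: "rho n x \<le> absl d n x" using rho_le_absl factors_Gdd[OF d1 xG] by blast
  have rw: "rho n (psi N) = absl d n (psi N)" using claim1[OF NG] by simp
  have sp: "Rg n (psi N) \<subseteq> FV.span (Rg n u \<union> Rg n x)" using Rg_mult[OF uc xc] ux by simp
  have int0: "y \<in> Rg n u \<Longrightarrow> y \<in> Rg n x \<Longrightarrow> y = 0" for y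
    by (rule dim_sum_eq_Int[OF Rg_Vn Rg_Vn sp]) (use ru rx rw len in \<open>auto simp: rho_def\<close>)
  have fixboth: "act n u hv = hv \<and> act n x hv = hv" if hv: "hv \<in> Vn n" "act n (psi N) hv = hv" for hv
  proof -
    have e: "act n u (act n x hv) = hv" using hv act_mult[OF uc xc] ux by simp
    define y where "y = act n x hv - hv"
    have yx: "y \<in> Rg n x" unfolding y_def Rg_def using hv by blast
    have "act n u (act n x hv) - act n x hv \<in> Rg n u" unfolding Rg_def by auto
    then have "- y \<in> Rg n u" using e by (simp add: y_def)
    then have "y \<in> Rg n u" using Rg_neg by fastforce
    then have "y = 0" using int0 yx by blast
    then have "act n x hv = hv" by (simp add: y_def)
    then show ?thesis using e by simp
  qed
  have fe: "act n u (ev l) = ev l \<and> act n x (ev l) = ev l" if "l < n" "l \<notin> K" for l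
    using fixboth[OF ev_Vn[OF that(1)] psi_fix_ev[OF that]] .
  have fv: "act n u v0 = v0 \<and> act n x v0 = v0"
    using fixboth[OF v0_Vn psi_fix_v0[OF NG]] .
  show "\<exists>M\<in>Gdd 1 k. u = psi M" by (rule fix_in_image[OF uG]) (use fe fv in auto)
  show "\<exists>X\<in>Gdd 1 k. x = psi X" by (rule fix_in_image[OF xG]) (use fe fv in auto)
qed

lemma order_iff:
  assumes M: "M \<in> Gdd 1 k" and N: "N \<in> Gdd 1 k"
  shows "absle d n (psi M) (psi N) \<longleftrightarrow> absle 1 k M N"
proof
  assume "absle d n (psi M) (psi N)"
  then obtain x where x: "x \<in> Gdd d n" "psi M * x = psi N"
    "absl d n (psi N) = absl d n (psi M) + absl d n x"
    by (auto simp: absle_def)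
  obtain X where X: "X \<in> Gdd 1 k" "x = psi X"
    using claim3(2)[OF N psi_Gdd(1)[OF M] x(1) x(2,3)] by blast
  have Mc: "M \<in> carrier_mat k k" and Xc: "X \<in> carrier_mat k k" and Nc: "N \<in> carrier_mat k k"
    using M X N Gdd_carrier by auto
  have "psi (M * X) = psi N" using x X psi_mult[OF Mc Xc] by simp
  then have MX: "M * X = N" using psi_inj[OF mult_carrier_mat[OF Mc Xc] Nc] by simp
  have "absl 1 k N = absl 1 k M + absl 1 k X" using x X claim1 M N by simp
  then show "absle 1 k M N" unfolding absle_def using M N X MX by blast
next
  assume "absle 1 k M N"
  then obtain X where X: "X \<in> Gdd 1 k" "M * X = N" "absl 1 k N = absl 1 k M + absl 1 k X"
    by (auto simp: absle_def)
  have Mc: "M \<in> carrier_mat k k" and Xc: "X \<in> carrier_mat k k"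
    using M X Gdd_carrier by auto
  have "psi M * psi X = psi N" using psi_mult[OF Mc Xc] X by simp
  moreover have "absl d n (psi N) = absl d n (psi M) + absl d n (psi X)" using X claim1 M N by simp
  ultimately show "absle d n (psi M) (psi N)" unfolding absle_def
    using psi_Gdd(1) M N X by blast
qed

end


lemma mod_suc_lt: "(i::nat) < k \<Longrightarrow> (Suc i) mod k = (if Suc i = k then 0 else Suc i)"
  by (cases "Suc i = k") auto

lemma long_cycle_monm: "long_cycle k = monm k (\<lambda>j. (j + 1) mod k) (\<lambda>_. 1)"
  by (rule eq_matI) (auto simp: long_cycle_def monm_index)

lemma long_cycle_Gdd:
  assumes "k \<ge> 1"
  shows "long_cycle k \<in> Gdd 1 k"
proof -
  have inj: "inj_on (\<lambda>j. (j + 1) mod k) {..<k}"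
    by (rule inj_onI) (auto simp: mod_suc_lt split: if_splits)
  have sub: "(\<lambda>j. (j + 1) mod k) ` {..<k} \<subseteq> {..<k}" using assms by auto
  have "bij_betw (\<lambda>j. (j + 1) mod k) {..<k} {..<k}"
    unfolding bij_betw_def using inj sub endo_inj_surj[of "{..<k}"] by auto
  then show ?thesis unfolding long_cycle_monm by (intro monm_Gdd) auto
qed

lemma zeta_ne0: "zeta d \<noteq> 0" by (simp add: zeta_def)

lemma zeta_pow: "d \<ge> 1 \<Longrightarrow> zeta d ^ d = 1"
proof -
  assume "d \<ge> 1"
  then have "real d * (2 * pi / real d) = 2 * pi" by simp
  then show ?thesis by (simp add: zeta_def DeMoivre)
qed

lemma mat_unit_entry:
  fixes A :: "complex mat"
  assumes "A \<in> carrier_mat n n" "a < n" "b < n"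
  shows "(A *\<^sub>v unit_vec n b) $ a = A $$ (a, b)"
proof -
  have "(A *\<^sub>v unit_vec n b) $ a = (\<Sum>l<n. A $$ (a, l) * (if l = b then 1 else 0))"
    using assms by (simp add: scalar_prod_def atLeast0LessThan unit_vec_def)
  also have "\<dots> = (\<Sum>l<n. if l = b then A $$ (a, l) else 0)" by (rule sum.cong) auto
  finally show ?thesis using assms by simp
qed

theorem lemma3p2:
  fixes d n k :: nat and w :: "complex mat"
  assumes "d \<ge> 2" and "n \<ge> 2"
    and "parabolic_coxeter d n w"
    and "single_sim_cycle d n w k"
  shows "\<exists>f. bij_betw f (interval d n w) (NC_A k) \<and>
           (\<forall>u \<in> interval d n w. \<forall>v \<in> interval d n w.
               absle d n u v \<longleftrightarrow> absle 1 k (f u) (f v))"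
proof -
  obtain ks ts where wG: "w \<in> Gdd d n" and k1: "k \<ge> 1" and lks: "length ks = k"
    and lts: "length ts = k" and dist: "distinct ks" and sub: "set ks \<subseteq> {..<n}"
    and cyc: "\<forall>i<k. w *\<^sub>v (zeta d ^ (ts!i) \<cdot>\<^sub>v unit_vec n (ks!i))
              = zeta d ^ (ts!((i+1) mod k)) \<cdot>\<^sub>v unit_vec n (ks!((i+1) mod k))"
    and fx: "\<forall>j<n. j \<notin> set ks \<longrightarrow> w *\<^sub>v unit_vec n j = unit_vec n j"
    using assms(4) unfolding single_sim_cycle_def by blast
  have d1: "d \<ge> 1" using assms(1) by simp
  define z where "z = (\<lambda>i. zeta d ^ (ts ! i))"
  have z0: "z i \<noteq> 0" for i by (simp add: z_def zeta_ne0)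
  have zd: "z i ^ d = 1" for i
    by (simp add: z_def power_mult[symmetric] mult.commute[of _ d] power_mult zeta_pow[OF d1])
  interpret E: emb n k ks z d
    by unfold_locales (use lks dist sub z0 zd d1 in auto)
  define C where "C = long_cycle k"
  have CG: "C \<in> Gdd 1 k" unfolding C_def by (rule long_cycle_Gdd[OF k1])
  have wc: "w \<in> carrier_mat n n" using wG Gdd_carrier by blast
  have wC: "w = E.psi C"
  proof (rule eq_matI)
    fix a b assume "a < dim_row (E.psi C)" "b < dim_col (E.psi C)"
    then have ab: "a < n" "b < n" by auto
    show "w $$ (a, b) = E.psi C $$ (a, b)"
    proof (cases "b \<in> set ks")
      case False
      have "w $$ (a, b) = unit_vec n b $ a" using mat_unit_entry[OF wc ab] fx ab False by simp
      then show ?thesis using ab False by (auto simp: E.psi_index)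
    next
      case True
      define i where "i = E.ix b"
      have i: "i < k" "ks ! i = b" using True by (auto simp: i_def)
      define i' where "i' = (i + 1) mod k"
      have i': "i' < k" using k1 by (simp add: i'_def)
      have "w *\<^sub>v (z i \<cdot>\<^sub>v unit_vec n b) = z i' \<cdot>\<^sub>v unit_vec n (ks ! i')"
        using cyc[rule_format, OF i(1)] i(2) by (simp add: z_def i'_def)
      then have "(w *\<^sub>v (z i \<cdot>\<^sub>v unit_vec n b)) $ a = (z i' \<cdot>\<^sub>v unit_vec n (ks ! i')) $ a" by simp
      moreover have "(w *\<^sub>v (z i \<cdot>\<^sub>v unit_vec n b)) $ a = z i * w $$ (a, b)"
        using mult_mat_vec[OF wc, of "unit_vec n b" "z i"] mat_unit_entry[OF wc ab] ab wc by simp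
      moreover have "(z i' \<cdot>\<^sub>v unit_vec n (ks ! i')) $ a = z i' * (if a = ks ! i' then 1 else 0)"
        using ab by (simp add: unit_vec_def)
      ultimately have wab: "w $$ (a, b) = (if a = ks ! i' then z i' / z i else 0)"
        using z0[of i] by (auto simp: field_simps)
      show ?thesis
      proof (cases "a \<in> set ks")
        case aK: True
        have "C $$ (E.ix a, i) = (if E.ix a = i' then 1 else 0)"
          using aK i by (simp add: C_def long_cycle_def i'_def)
        moreover have "E.ix a = i' \<longleftrightarrow> a = ks ! i'" using aK i' by auto
        ultimately show ?thesis using aK True ab wab i by (auto simp: E.psi_index i_def)
      next
        case aK: False
        then have "a \<noteq> ks ! i'" "a \<noteq> b" using i' True by auto
        then show ?thesis using aK wab ab by (simp add: E.psi_index)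
      qed
    qed
  qed (use wc in auto)
  have NCG: "NC_A k \<subseteq> Gdd 1 k" by (auto simp: NC_A_def absle_def)
  have one_le: "absle 1 k (1\<^sub>m k) M" if "M \<in> Gdd 1 k" for M
  proof -
    have Mc: "M \<in> carrier_mat k k" using that Gdd_carrier by blast
    show ?thesis unfolding absle_def using that Gdd_one[of k 1] Mc
      by (auto simp: absl_one intro!: bexI[of _ M])
  qed
  have int_eq: "interval d n w = E.psi ` NC_A k"
  proof
    show "interval d n w \<subseteq> E.psi ` NC_A k"
    proof
      fix u assume "u \<in> interval d n w"
      then have "absle d n u w" by (simp add: interval_def)
      then obtain x where x: "u \<in> Gdd d n" "x \<in> Gdd d n" "u * x = E.psi C"
        "absl d n (E.psi C) = absl d n u + absl d n x"
        by (auto simp: absle_def wC)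
      obtain M where M: "M \<in> Gdd 1 k" "u = E.psi M" using E.claim3(1)[OF CG x] by blast
      have "absle d n (E.psi M) (E.psi C)" using \<open>absle d n u w\<close> M wC by simp
      then have "absle 1 k M C" using E.order_iff[OF M(1) CG] by simp
      then show "u \<in> E.psi ` NC_A k" using M by (auto simp: NC_A_def C_def)
    qed
  next
    show "E.psi ` NC_A k \<subseteq> interval d n w"
    proof
      fix u assume "u \<in> E.psi ` NC_A k"
      then obtain M where M: "M \<in> NC_A k" "u = E.psi M" by blast
      have MG: "M \<in> Gdd 1 k" using M NCG by blast
      have "absle 1 k M C" using M by (simp add: NC_A_def C_def)
      then have a1: "absle d n u w" using E.order_iff[OF MG CG] M wC by simp
      have "absle 1 k (1\<^sub>m k) M" by (rule one_le[OF MG])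
      then have "absle d n (E.psi (1\<^sub>m k)) (E.psi M)" using E.order_iff[OF Gdd_one MG] by simp
      then have a2: "absle d n (1\<^sub>m n) u" using M by (simp add: E.psi_one)
      show "u \<in> interval d n w" using a1 a2 by (simp add: interval_def)
    qed
  qed
  have inj: "inj_on E.psi (NC_A k)"
  proof (rule inj_onI)
    fix M N assume "M \<in> NC_A k" "N \<in> NC_A k" "E.psi M = E.psi N"
    then show "M = N" using E.psi_inj NCG Gdd_carrier by (metis subset_iff)
  qed
  have bij: "bij_betw E.psi (NC_A k) (interval d n w)"
    unfolding bij_betw_def using inj int_eq by simp
  define f where "f = inv_into (NC_A k) E.psi"
  show ?thesis
  proof (intro exI[of _ f] conjI ballI)
    show "bij_betw f (interval d n w) (NC_A k)" unfolding f_def by (rule bij_betw_inv_into[OF bij])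
    fix u v assume u: "u \<in> interval d n w" and v: "v \<in> interval d n w"
    obtain M where M: "M \<in> NC_A k" "u = E.psi M" using u int_eq by blast
    obtain N where N: "N \<in> NC_A k" "v = E.psi N" using v int_eq by blast
    have fu: "f u = M" unfolding f_def M(2) by (rule inv_into_f_f[OF inj M(1)])
    have fv: "f v = N" unfolding f_def N(2) by (rule inv_into_f_f[OF inj N(1)])
    have "absle d n (E.psi M) (E.psi N) \<longleftrightarrow> absle 1 k M N"
      by (rule E.order_iff) (use M N NCG in auto)
    then show "absle d n u v \<longleftrightarrow> absle 1 k (f u) (f v)" using fu fv M(2) N(2) by simp
  qed
qed


end
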